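(* Consider the iterates $\Theta_k=(\Omega_k,U_k,Q_k,W_k,\varepsilon^{(1)}_k,\varepsilon^{(2)}_k,Z^{(1)}_k,Z^{(2)}_k)$ produced by the linearized ADM iteration described in the context, with parameters $\lambda_1,\lambda_2,\rho_1,\rho_2,\delta_1,\delta_2,\mu>0$ and step parameters $\eta_U,\eta_Q,\eta_W>0$. Suppose that $\mu\geq\sqrt 2\max\{\rho_1,\rho_2\}$. Then there exist positive values $\eta^0_U,\eta^0_Q,\eta^0_W,R$, depending only on the initialization, such that whenever $\eta_U>\eta^0_U$, $\eta_Q>\eta^0_Q$, $\eta_W>\eta^0_W$, the sequence $\{\Theta_k\}_{k=1}^\infty$ converges (in the sense $\mathrm{dist}(\Theta_k,S)\to 0$) to the following set of bounded feasible stationary points of the Lagrangian: $$S=\Big\{\Theta=(\Omega,U,Q,W,\varepsilon^{(1)},\varepsilon^{(2)},Z^{(1)},Z^{(2)}) \;\Big|\; \|\Theta\|<R,\ -\nabla L_s(\Theta)\in\lambda_1\partial\|U\|_1,\ H=QU+\varepsilon^{(1)},\ Y=WQU+\varepsilon^{(2)}\Big\},$$ where $\|U\|_1$ is regarded as a convex function of $\Theta$ that is constant in all components other than $U$ (so the inclusion means $-\nabla_U L_s(\Theta)\in\lambda_1\partial\|U\|_1$ and all other partial gradients of $L_s$ vanish), and $\mathrm{dist}(\Theta,S)=\inf_{\Theta'\in S}\|\Theta'-\Theta\|$.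
   Context: Data: $X\in\mathbb{R}^{m\times n}$, $H\in\mathbb{R}^{s\times n}$, $Y\in\mathbb{R}^{c\times n}$. Variables: $\Omega\in\mathbb{R}^{r\times m}$, $U\in\mathbb{R}^{r\times n}$, $Q\in\mathbb{R}^{s\times r}$, $W\in\mathbb{R}^{c\times s}$, $\varepsilon^{(1)},Z^{(1)}\in\mathbb{R}^{s\times n}$, $\varepsilon^{(2)},Z^{(2)}\in\mathbb{R}^{c\times n}$. Matrix norms $\|\cdot\|_F,\|\cdot\|_2$ are Frobenius norms, $\langle A,B\rangle=\mathrm{tr}(A^TB)$, $\|U\|_1=\sum_{ij}|U_{ij}|$. The Lagrangian is $L(\Omega,U,Q,W,\varepsilon^{(1)},\varepsilon^{(2)},Z^{(1)},Z^{(2)})=\frac12\|U-\Omega X\|_F^2+\lambda_1\|U\|_1+\frac{\rho_1}{2}\|\varepsilon^{(1)}\|^2+\frac{\rho_2}{2}\|\varepsilon^{(2)}\|^2+\langle Z^{(1)},H-QU-\varepsilon^{(1)}\rangle+\langle Z^{(2)},Y-WQU-\varepsilon^{(2)}\rangle+\frac{\mu}{2}\|H-QU-\varepsilon^{(1)}\|^2+\frac{\mu}{2}\|Y-WQU-\varepsilon^{(2)}\|^2+\frac{\delta_1}{2}\|Q\|^2+\frac{\delta_2}{2}\|W\|^2+\frac{\lambda_2}{2}\|\Omega\|^2$, and $L_s=L-\lambda_1\|U\|_1$ is its smooth part. Let $\tau_t$ denote entrywise soft thresholding, $\tau_t(x)=\mathrm{sign}(x)\max(|x|-t,0)$. Starting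 from an initialization $\Theta_0$, the iteration is, for $k=0,1,2,\dots$: $U_{k+1}=\tau_{\lambda_1/(\mu\eta_U)}\big(U_k-\frac{1}{\mu\eta_U}\nabla_U L_s(\Omega_k,U_k,Q_k,W_k,\varepsilon^{(1)}_k,\varepsilon^{(2)}_k,Z^{(1)}_k,Z^{(2)}_k)\big)$; $Q_{k+1}=Q_k-\frac{1}{\mu\eta_Q}\nabla_Q L(\Omega_k,U_{k+1},Q_k,W_k,\varepsilon^{(1)}_k,\varepsilon^{(2)}_k,Z^{(1)}_k,Z^{(2)}_k)$; $W_{k+1}=W_k-\frac{1}{\mu\eta_W}\nabla_W L(\Omega_k,U_{k+1},Q_{k+1},W_k,\varepsilon^{(1)}_k,\varepsilon^{(2)}_k,Z^{(1)}_k,Z^{(2)}_k)$; $\Omega_{k+1}=\arg\min_\Omega L(\Omega,U_{k+1},Q_{k+1},W_{k+1},\varepsilon^{(1)}_k,\varepsilon^{(2)}_k,Z^{(1)}_k,Z^{(2)}_k)$; $\varepsilon^{(1)}_{k+1}=\arg\min_{\varepsilon^{(1)}} L(\Omega_{k+1},U_{k+1},Q_{k+1},W_{k+1},\varepsilon^{(1)},\varepsilon^{(2)}_k,Z^{(1)}_k,Z^{(2)}_k)$; $\varepsilon^{(2)}_{k+1}=\arg\min_{\varepsilon^{(2)}} L(\Omega_{k+1},U_{k+1},Q_{k+1},W_{k+1},\varepsilon^{(1)}_{k+1},\varepsilon^{(2)},Z^{(1)}_k,Z^{(2)}_k)$; $Z^{(1)}_{k+1}=Z^{(1)}_k+\mu(H-Q_{k+1}U_{k+1}-\varepsilon^{(1)}_{k+1})$;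 $Z^{(2)}_{k+1}=Z^{(2)}_k+\mu(Y-W_{k+1}Q_{k+1}U_{k+1}-\varepsilon^{(2)}_{k+1})$. The norm $\|\Theta\|$ is any norm continuous with respect to the Frobenius norms of the components (e.g. their sum). *)

theory Defs
  imports "HOL-Analysis.Analysis"
begin

definition l1norm :: "real^'n^'m \<Rightarrow> real" where
  "l1norm A = (\<Sum>i\<in>UNIV. \<Sum>j\<in>UNIV. \<bar>A$i$j\<bar>)"

definition soft :: "real \<Rightarrow> real \<Rightarrow> real" where
  "soft t x = sgn x * max (\<bar>x\<bar> - t) 0"

definition soft_mat :: "real \<Rightarrow> real^'n^'m \<Rightarrow> real^'n^'m" where
  "soft_mat t A = (\<chi> i j. soft t (A$i$j))"

definition grad :: "('a::real_inner \<Rightarrow> real) \<Rightarrow> 'a \<Rightarrow> 'a" where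
  "grad f x = (THE g. (f has_derivative (\<lambda>h. g \<bullet> h)) (at x))"

definition subdiff :: "('a::real_inner \<Rightarrow> real) \<Rightarrow> 'a \<Rightarrow> 'a set" where
  "subdiff f x = {g. \<forall>y. f x + g \<bullet> (y - x) \<le> f y}"

text \<open>Smooth part of the Lagrangian. Norms of matrices (real^'n^'m) are Frobenius norms,
  inner products are trace inner products.\<close>
definition Ls ::
  "real^'n^'m \<Rightarrow> real^'n^'s \<Rightarrow> real^'n^'c \<Rightarrow> real \<Rightarrow> real \<Rightarrow> real \<Rightarrow> real \<Rightarrow> real \<Rightarrow> real \<Rightarrow>
   real^'m^'r \<Rightarrow> real^'n^'r \<Rightarrow> real^'r^'s \<Rightarrow> real^'s^'c \<Rightarrow> real^'n^'s \<Rightarrow> real^'n^'c \<Rightarrow>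
   real^'n^'s \<Rightarrow> real^'n^'c \<Rightarrow> real" where
  "Ls X H Y \<rho>1 \<rho>2 \<delta>1 \<delta>2 lam2 \<mu> Om U Q W e1 e2 Z1 Z2 =
     1/2 * (norm (U - Om ** X))^2
     + \<rho>1/2 * (norm e1)^2 + \<rho>2/2 * (norm e2)^2
     + Z1 \<bullet> (H - Q ** U - e1) + Z2 \<bullet> (Y - (W ** Q) ** U - e2)
     + \<mu>/2 * (norm (H - Q ** U - e1))^2 + \<mu>/2 * (norm (Y - (W ** Q) ** U - e2))^2
     + \<delta>1/2 * (norm Q)^2 + \<delta>2/2 * (norm W)^2 + lam2/2 * (norm Om)^2"

definition Lag ::
  "real^'n^'m \<Rightarrow> real^'n^'s \<Rightarrow> real^'n^'c \<Rightarrow> real \<Rightarrow> real \<Rightarrow> real \<Rightarrow> real \<Rightarrow> real \<Rightarrow> real \<Rightarrow> real \<Rightarrow>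
   real^'m^'r \<Rightarrow> real^'n^'r \<Rightarrow> real^'r^'s \<Rightarrow> real^'s^'c \<Rightarrow> real^'n^'s \<Rightarrow> real^'n^'c \<Rightarrow>
   real^'n^'s \<Rightarrow> real^'n^'c \<Rightarrow> real" where
  "Lag X H Y lam1 \<rho>1 \<rho>2 \<delta>1 \<delta>2 lam2 \<mu> Om U Q W e1 e2 Z1 Z2 =
     Ls X H Y \<rho>1 \<rho>2 \<delta>1 \<delta>2 lam2 \<mu> Om U Q W e1 e2 Z1 Z2 + lam1 * l1norm U"

definition LsT ::
  "real^'n^'m \<Rightarrow> real^'n^'s \<Rightarrow> real^'n^'c \<Rightarrow> real \<Rightarrow> real \<Rightarrow> real \<Rightarrow> real \<Rightarrow> real \<Rightarrow> real \<Rightarrow>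
   ((real^'m^'r) \<times> (real^'n^'r) \<times> (real^'r^'s) \<times> (real^'s^'c) \<times> (real^'n^'s) \<times>
    (real^'n^'c) \<times> (real^'n^'s) \<times> (real^'n^'c)) \<Rightarrow> real" where
  "LsT X H Y \<rho>1 \<rho>2 \<delta>1 \<delta>2 lam2 \<mu> th =
     (case th of (Om, U, Q, W, e1, e2, Z1, Z2) \<Rightarrow>
        Ls X H Y \<rho>1 \<rho>2 \<delta>1 \<delta>2 lam2 \<mu> Om U Q W e1 e2 Z1 Z2)"

definition statset ::
  "real^'n^'m \<Rightarrow> real^'n^'s \<Rightarrow> real^'n^'c \<Rightarrow> real \<Rightarrow> real \<Rightarrow> real \<Rightarrow> real \<Rightarrow> real \<Rightarrow> real \<Rightarrow> real \<Rightarrow>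
   real \<Rightarrow>
   ((real^'m^'r) \<times> (real^'n^'r) \<times> (real^'r^'s) \<times> (real^'s^'c) \<times> (real^'n^'s) \<times>
    (real^'n^'c) \<times> (real^'n^'s) \<times> (real^'n^'c)) set" where
  "statset X H Y lam1 \<rho>1 \<rho>2 \<delta>1 \<delta>2 lam2 \<mu> R =
     {th. norm th < R
        \<and> - grad (LsT X H Y \<rho>1 \<rho>2 \<delta>1 \<delta>2 lam2 \<mu>) th
            \<in> (\<lambda>g. lam1 *\<^sub>R g) ` subdiff (\<lambda>th'. l1norm (fst (snd th'))) th
        \<and> (case th of (Om, U, Q, W, e1, e2, Z1, Z2) \<Rightarrow>
             H = Q ** U + e1 \<and> Y = (W ** Q) ** U + e2)}"

end

theory Submission
  imports Defs "HOL-Library.Infinite_Set"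
begin

lemma inner_mat: "(A::real^'n^'m) \<bullet> B = (\<Sum>i\<in>UNIV. \<Sum>j\<in>UNIV. A$i$j * B$i$j)"
  by (simp add: inner_vec_def)

lemma norm_mat_sq: "(norm (A::real^'n^'m))^2 = (\<Sum>i\<in>UNIV. \<Sum>j\<in>UNIV. (A$i$j)^2)"
  unfolding power2_norm_eq_inner inner_mat by (simp add: power2_eq_square)

lemma mm_inner_right: "((A::real^'k^'m) ** (B::real^'p^'k)) \<bullet> C = B \<bullet> (transpose A ** C)"
proof -
  have "((A::real^'k^'m) ** (B::real^'p^'k)) \<bullet> C = (\<Sum>i\<in>UNIV. \<Sum>p\<in>UNIV. \<Sum>j\<in>UNIV. A$i$j * B$j$p * C$i$p)"
    by (simp add: inner_mat matrix_matrix_mult_def sum_distrib_right)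
  also have "\<dots> = (\<Sum>j\<in>UNIV. \<Sum>p\<in>UNIV. \<Sum>i\<in>UNIV. A$i$j * B$j$p * C$i$p)"
  proof -
    have "(\<Sum>i\<in>UNIV. \<Sum>p\<in>UNIV. \<Sum>j\<in>UNIV. A$i$j * B$j$p * C$i$p) = (\<Sum>i\<in>UNIV. \<Sum>j\<in>UNIV. \<Sum>p\<in>UNIV. A$i$j * B$j$p * C$i$p)"
      by (rule sum.cong[OF refl], rule sum.swap)
    also have "\<dots> = (\<Sum>j\<in>UNIV. \<Sum>i\<in>UNIV. \<Sum>p\<in>UNIV. A$i$j * B$j$p * C$i$p)"
      by (rule sum.swap)
    also have "\<dots> = (\<Sum>j\<in>UNIV. \<Sum>p\<in>UNIV. \<Sum>i\<in>UNIV. A$i$j * B$j$p * C$i$p)"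
      by (rule sum.cong[OF refl], rule sum.swap)
    finally show ?thesis .
  qed
  also have "\<dots> = B \<bullet> (transpose A ** C)"
    by (simp add: inner_mat matrix_matrix_mult_def transpose_def sum_distrib_left mult_ac)
  finally show ?thesis .
qed

lemma mm_inner_left: "((A::real^'k^'m) ** (B::real^'p^'k)) \<bullet> C = A \<bullet> (C ** transpose B)"
proof -
  have "((A::real^'k^'m) ** (B::real^'p^'k)) \<bullet> C = (\<Sum>i\<in>UNIV. \<Sum>p\<in>UNIV. \<Sum>j\<in>UNIV. A$i$j * B$j$p * C$i$p)"
    by (simp add: inner_mat matrix_matrix_mult_def sum_distrib_right)
  also have "\<dots> = (\<Sum>i\<in>UNIV. \<Sum>j\<in>UNIV. \<Sum>p\<in>UNIV. A$i$j * B$j$p * C$i$p)"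
    by (rule sum.cong, simp, rule sum.swap)
  also have "\<dots> = A \<bullet> (C ** transpose B)"
    by (simp add: inner_mat matrix_matrix_mult_def transpose_def sum_distrib_left mult_ac)
  finally show ?thesis .
qed

lemma norm_mm_le: "norm ((A::real^'k^'m) ** (B::real^'p^'k)) \<le> norm A * norm B"
proof -
  have "(norm (A ** B))^2 = (\<Sum>i\<in>UNIV. \<Sum>p\<in>UNIV. (\<Sum>j\<in>UNIV. A$i$j * B$j$p)^2)"
    by (simp add: norm_mat_sq matrix_matrix_mult_def)
  also have "\<dots> \<le> (\<Sum>i\<in>UNIV. \<Sum>p\<in>UNIV. (\<Sum>j\<in>UNIV. (A$i$j)^2) * (\<Sum>j\<in>UNIV. (B$j$p)^2))"
  proof (intro sum_mono)
    fix i p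
    have "(\<Sum>j\<in>UNIV. A$i$j * B$j$p)^2 = ((\<chi> j. A$i$j) \<bullet> (\<chi> j. B$j$p))^2"
      by (simp add: inner_vec_def)
    also have "\<dots> \<le> (norm (\<chi> j. A$i$j))^2 * (norm (\<chi> j. B$j$p))^2"
      by (metis Cauchy_Schwarz_ineq power_mult_distrib power2_norm_eq_inner)
    also have "\<dots> = (\<Sum>j\<in>UNIV. (A$i$j)^2) * (\<Sum>j\<in>UNIV. (B$j$p)^2)"
      unfolding power2_norm_eq_inner inner_vec_def by (simp add: power2_eq_square)
    finally show "(\<Sum>j\<in>UNIV. A$i$j * B$j$p)^2 \<le> (\<Sum>j\<in>UNIV. (A$i$j)^2) * (\<Sum>j\<in>UNIV. (B$j$p)^2)" .
  qed
  also have "\<dots> = (\<Sum>i\<in>UNIV. \<Sum>j\<in>UNIV. (A$i$j)^2) * (\<Sum>p\<in>UNIV. \<Sum>j\<in>UNIV. (B$j$p)^2)"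
    by (simp only: sum_product)
  also have "\<dots> = (norm A)^2 * (norm B)^2"
    by (simp add: norm_mat_sq, subst (2) sum.swap, simp)
  also have "\<dots> = (norm A * norm B)^2" by (simp add: power_mult_distrib)
  finally show ?thesis
    by (meson mult_nonneg_nonneg norm_ge_zero power2_le_imp_le)
qed

lemma mm_add_left: "((A::real^'k^'m) + B) ** (C::real^'p^'k) = A ** C + B ** C"
  by (vector matrix_matrix_mult_def sum.distrib[symmetric] field_simps)

lemma mm_scaleR_left: "(r *\<^sub>R (A::real^'k^'m)) ** (C::real^'p^'k) = r *\<^sub>R (A ** C)"
  by (simp add: scalar_matrix_assoc)

lemma mm_scaleR_right: "(A::real^'k^'m) ** (r *\<^sub>R (C::real^'p^'k)) = r *\<^sub>R (A ** C)"
  by (simp add: matrix_scalar_ac scalar_matrix_assoc)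

lemma bounded_bilinear_mm[bounded_bilinear]: "bounded_bilinear ((**) :: real^'k^'m \<Rightarrow> real^'p^'k \<Rightarrow> real^'p^'m)"
proof
  fix a a' :: "real^'k^'m" and b b' :: "real^'p^'k" and r :: real
  show "(a + a') ** b = a ** b + a' ** b" by (rule mm_add_left)
  show "a ** (b + b') = a ** b + a ** b'" by (rule matrix_add_ldistrib)
  show "(r *\<^sub>R a) ** b = r *\<^sub>R (a ** b)" by (rule mm_scaleR_left)
  show "a ** (r *\<^sub>R b) = r *\<^sub>R (a ** b)" by (rule mm_scaleR_right)
  show "\<exists>K. \<forall>a b. norm ((a::real^'k^'m) ** (b::real^'p^'k)) \<le> norm a * norm b * K"
    by (rule exI[of _ 1]) (simp add: norm_mm_le)
qed

lemma norm_transpose: "norm (transpose (A::real^'n^'m)) = norm A"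
proof -
  have "(norm (transpose A))^2 = (norm A)^2"
    by (simp add: norm_mat_sq transpose_def, rule sum.swap)
  then show ?thesis by (simp add: power2_eq_iff_nonneg)
qed

lemma bounded_linear_transpose[bounded_linear]: "bounded_linear (transpose :: real^'n^'m \<Rightarrow> real^'m^'n)"
proof
  fix a b :: "real^'n^'m" and r :: real
  show "transpose (a + b) = transpose a + transpose b" by (vector transpose_def)
  show "transpose (r *\<^sub>R a) = r *\<^sub>R transpose a" by (rule transpose_scalar)
  show "\<exists>K. \<forall>x::real^'n^'m. norm (transpose x) \<le> norm x * K"
    by (rule exI[of _ 1]) (simp add: norm_transpose)
qed


lemma mm_diff_left: "((A::real^'k^'m) - B) ** (C::real^'p^'k) = A ** C - B ** C"
  by (rule bounded_bilinear.diff_left[OF bounded_bilinear_mm])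
lemma mm_diff_right: "(A::real^'k^'m) ** ((B::real^'p^'k) - C) = A ** B - A ** C"
  by (rule bounded_bilinear.diff_right[OF bounded_bilinear_mm])
lemma mm_minus_left: "(- (A::real^'k^'m)) ** (C::real^'p^'k) = - (A ** C)"
  by (rule bounded_bilinear.minus_left[OF bounded_bilinear_mm])
lemma mm_minus_right: "(A::real^'k^'m) ** (- (C::real^'p^'k)) = - (A ** C)"
  by (rule bounded_bilinear.minus_right[OF bounded_bilinear_mm])

lemmas mm_simps = matrix_add_ldistrib mm_add_left mm_diff_left mm_diff_right mm_minus_left
  mm_minus_right mm_scaleR_left mm_scaleR_right

definition GOm :: "real^'n^'m \<Rightarrow> real \<Rightarrow> real^'m^'r \<Rightarrow> real^'n^'r \<Rightarrow> real^'m^'r" where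
  "GOm X lam2 Om U = - ((U - Om ** X) ** transpose X) + lam2 *\<^sub>R Om"

definition GU where
  "GU X H Y \<mu> Om U Q W e1 e2 Z1 Z2 = (U - Om ** X)
     - transpose Q ** (Z1 + \<mu> *\<^sub>R (H - Q ** U - e1))
     - transpose (W ** Q) ** (Z2 + \<mu> *\<^sub>R (Y - (W ** Q) ** U - e2))"

definition GQ where
  "GQ H Y \<delta>1 \<mu> U Q W e1 e2 Z1 Z2 =
     - ((Z1 + \<mu> *\<^sub>R (H - Q ** U - e1)) ** transpose U)
     - transpose W ** ((Z2 + \<mu> *\<^sub>R (Y - (W ** Q) ** U - e2)) ** transpose U)
     + \<delta>1 *\<^sub>R Q"

definition GW where
  "GW Y \<delta>2 \<mu> U Q W e2 Z2 =
     - ((Z2 + \<mu> *\<^sub>R (Y - (W ** Q) ** U - e2)) ** transpose (Q ** U)) + \<delta>2 *\<^sub>R W"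

definition GT where
  "GT X H Y \<rho>1 \<rho>2 \<delta>1 \<delta>2 lam2 \<mu> th = (case th of (Om, U, Q, W, e1, e2, Z1, Z2) \<Rightarrow>
     (GOm X lam2 Om U, GU X H Y \<mu> Om U Q W e1 e2 Z1 Z2, GQ H Y \<delta>1 \<mu> U Q W e1 e2 Z1 Z2,
      GW Y \<delta>2 \<mu> U Q W e2 Z2,
      \<rho>1 *\<^sub>R e1 - Z1 - \<mu> *\<^sub>R (H - Q ** U - e1),
      \<rho>2 *\<^sub>R e2 - Z2 - \<mu> *\<^sub>R (Y - (W ** Q) ** U - e2),
      H - Q ** U - e1, Y - (W ** Q) ** U - e2))"

lemma tr_inner1: "(A::real^'k^'m) \<bullet> (C ** transpose B) = (A ** B) \<bullet> C"
  by (rule mm_inner_left[symmetric])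
lemma tr_inner2: "((C::real^'k^'m) ** transpose B) \<bullet> A = (A ** B) \<bullet> C"
  by (metis mm_inner_left inner_commute)
lemma tr_inner3: "(B::real^'k^'m) \<bullet> (transpose A ** C) = (A ** B) \<bullet> C"
  by (rule mm_inner_right[symmetric])
lemma tr_inner4: "(transpose A ** C) \<bullet> (B::real^'k^'m) = (A ** B) \<bullet> C"
  by (metis mm_inner_right inner_commute)

lemma LsT_proj: "LsT X H Y \<rho>1 \<rho>2 \<delta>1 \<delta>2 lam2 \<mu> = (\<lambda>th. Ls X H Y \<rho>1 \<rho>2 \<delta>1 \<delta>2 lam2 \<mu>
   (fst th) (fst (snd th)) (fst (snd (snd th))) (fst (snd (snd (snd th))))
   (fst (snd (snd (snd (snd th))))) (fst (snd (snd (snd (snd (snd th))))))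
   (fst (snd (snd (snd (snd (snd (snd th)))))))  (snd (snd (snd (snd (snd (snd (snd th))))))))"
  by (auto simp: LsT_def fun_eq_iff split: prod.split)

lemma LsT_deriv:
  "(LsT X H Y \<rho>1 \<rho>2 \<delta>1 \<delta>2 lam2 \<mu> has_derivative (\<lambda>h. GT X H Y \<rho>1 \<rho>2 \<delta>1 \<delta>2 lam2 \<mu> th \<bullet> h)) (at th)"
  unfolding LsT_proj Ls_def power2_norm_eq_inner
  apply (rule has_derivative_eq_rhs)
   apply (rule derivative_eq_intros | simp)+
  apply (cases th)
  apply (simp add: fun_eq_iff GT_def split: prod.split)
  apply (simp add: GOm_def GU_def GQ_def GW_def inner_add_left inner_add_right inner_diff_left inner_diff_right
     mm_simps tr_inner1 tr_inner2 tr_inner3 tr_inner4)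
  apply (simp add: inner_commute matrix_mul_assoc)
  apply (simp add: field_simps)
  done


lemma grad_eqI: "(f has_derivative (\<lambda>h. g \<bullet> h)) (at x) \<Longrightarrow> grad f x = g"
  unfolding grad_def
proof (rule the_equality)
  fix g' assume a: "(f has_derivative (\<lambda>h. g \<bullet> h)) (at x)" and b: "(f has_derivative (\<lambda>h. g' \<bullet> h)) (at x)"
  have "(\<lambda>h. g' \<bullet> h) = (\<lambda>h. g \<bullet> h)" using has_derivative_unique[OF b a] .
  then have "g' \<bullet> (g' - g) = g \<bullet> (g' - g)" by metis
  then have "(g' - g) \<bullet> (g' - g) = 0" by (simp add: inner_diff_left)
  then show "g' = g" by simp
qed

lemma deriv_zero_min:
  assumes "(f has_derivative (\<lambda>h. g \<bullet> h)) (at x)" "\<And>y. f x \<le> f y"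
  shows "g = 0"
proof -
  have "(\<lambda>h. g \<bullet> h) = (\<lambda>h. 0)"
    by (rule has_derivative_local_min[OF assms(1)]) (simp add: assms(2))
  then have "g \<bullet> g = 0" by metis
  then show ?thesis by simp
qed

context
  fixes X :: "real^'n^'m" and H :: "real^'n^'s" and Y :: "real^'n^'c"
    and lam1 lam2 \<rho>1 \<rho>2 \<delta>1 \<delta>2 \<mu> :: real
begin

lemma LsT_eval: "LsT X H Y \<rho>1 \<rho>2 \<delta>1 \<delta>2 lam2 \<mu> (Om, U, Q, W, e1, e2, Z1, Z2) = Ls X H Y \<rho>1 \<rho>2 \<delta>1 \<delta>2 lam2 \<mu> Om U Q W e1 e2 Z1 Z2"
  by (simp add: LsT_def)

lemma dOm: "((\<lambda>V. Lag X H Y lam1 \<rho>1 \<rho>2 \<delta>1 \<delta>2 lam2 \<mu> V (U::real^'n^'r) (Q::real^'r^'s) (W::real^'s^'c) e1 e2 Z1 Z2)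
   has_derivative (\<lambda>h. GOm X lam2 (Om::real^'m^'r) U \<bullet> h)) (at Om)"
proof -
  have "((\<lambda>V. LsT X H Y \<rho>1 \<rho>2 \<delta>1 \<delta>2 lam2 \<mu> (V, U, Q, W, e1, e2, Z1, Z2)) has_derivative
     (\<lambda>h. GT X H Y \<rho>1 \<rho>2 \<delta>1 \<delta>2 lam2 \<mu> (Om, U, Q, W, e1, e2, Z1, Z2) \<bullet> (h, 0, 0, 0, 0, 0, 0, 0))) (at Om)"
    by (rule has_derivative_compose[OF _ LsT_deriv]) (auto intro!: derivative_eq_intros simp: zero_prod_def)
  then have "((\<lambda>V. LsT X H Y \<rho>1 \<rho>2 \<delta>1 \<delta>2 lam2 \<mu> (V, U, Q, W, e1, e2, Z1, Z2) + lam1 * l1norm U) has_derivative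
     (\<lambda>h. GOm X lam2 Om U \<bullet> h)) (at Om)"
    by (intro has_derivative_add_const) (simp add: GT_def)
  then show ?thesis by (simp add: Lag_def LsT_eval)
qed

lemma dU: "((\<lambda>V. Ls X H Y \<rho>1 \<rho>2 \<delta>1 \<delta>2 lam2 \<mu> (Om::real^'m^'r) V (Q::real^'r^'s) (W::real^'s^'c) e1 e2 Z1 Z2)
   has_derivative (\<lambda>h. GU X H Y \<mu> Om U Q W e1 e2 Z1 Z2 \<bullet> h)) (at U)"
proof -
  have "((\<lambda>V. LsT X H Y \<rho>1 \<rho>2 \<delta>1 \<delta>2 lam2 \<mu> (Om, V, Q, W, e1, e2, Z1, Z2)) has_derivative
     (\<lambda>h. GT X H Y \<rho>1 \<rho>2 \<delta>1 \<delta>2 lam2 \<mu> (Om, U, Q, W, e1, e2, Z1, Z2) \<bullet> (0, h, 0, 0, 0, 0, 0, 0))) (at U)"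
    by (rule has_derivative_compose[OF _ LsT_deriv]) (auto intro!: derivative_eq_intros simp: zero_prod_def)
  then show ?thesis by (simp add: LsT_eval GT_def)
qed

lemma dQ: "((\<lambda>V. Lag X H Y lam1 \<rho>1 \<rho>2 \<delta>1 \<delta>2 lam2 \<mu> (Om::real^'m^'r) (U::real^'n^'r) V (W::real^'s^'c) e1 e2 Z1 Z2)
   has_derivative (\<lambda>h. GQ H Y \<delta>1 \<mu> U (Q::real^'r^'s) W e1 e2 Z1 Z2 \<bullet> h)) (at Q)"
proof -
  have "((\<lambda>V. LsT X H Y \<rho>1 \<rho>2 \<delta>1 \<delta>2 lam2 \<mu> (Om, U, V, W, e1, e2, Z1, Z2)) has_derivative
     (\<lambda>h. GT X H Y \<rho>1 \<rho>2 \<delta>1 \<delta>2 lam2 \<mu> (Om, U, Q, W, e1, e2, Z1, Z2) \<bullet> (0, 0, h, 0, 0, 0, 0, 0))) (at Q)"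
    by (rule has_derivative_compose[OF _ LsT_deriv]) (auto intro!: derivative_eq_intros simp: zero_prod_def)
  then have "((\<lambda>V. LsT X H Y \<rho>1 \<rho>2 \<delta>1 \<delta>2 lam2 \<mu> (Om, U, V, W, e1, e2, Z1, Z2) + lam1 * l1norm U) has_derivative
     (\<lambda>h. GQ H Y \<delta>1 \<mu> U Q W e1 e2 Z1 Z2 \<bullet> h)) (at Q)"
    by (intro has_derivative_add_const) (simp add: GT_def)
  then show ?thesis by (simp add: Lag_def LsT_eval)
qed

lemma dW: "((\<lambda>V. Lag X H Y lam1 \<rho>1 \<rho>2 \<delta>1 \<delta>2 lam2 \<mu> (Om::real^'m^'r) (U::real^'n^'r) (Q::real^'r^'s) V e1 e2 Z1 Z2)
   has_derivative (\<lambda>h. GW Y \<delta>2 \<mu> U Q (W::real^'s^'c) e2 Z2 \<bullet> h)) (at W)"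
proof -
  have "((\<lambda>V. LsT X H Y \<rho>1 \<rho>2 \<delta>1 \<delta>2 lam2 \<mu> (Om, U, Q, V, e1, e2, Z1, Z2)) has_derivative
     (\<lambda>h. GT X H Y \<rho>1 \<rho>2 \<delta>1 \<delta>2 lam2 \<mu> (Om, U, Q, W, e1, e2, Z1, Z2) \<bullet> (0, 0, 0, h, 0, 0, 0, 0))) (at W)"
    by (rule has_derivative_compose[OF _ LsT_deriv]) (auto intro!: derivative_eq_intros simp: zero_prod_def)
  then have "((\<lambda>V. LsT X H Y \<rho>1 \<rho>2 \<delta>1 \<delta>2 lam2 \<mu> (Om, U, Q, V, e1, e2, Z1, Z2) + lam1 * l1norm U) has_derivative
     (\<lambda>h. GW Y \<delta>2 \<mu> U Q W e2 Z2 \<bullet> h)) (at W)"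
    by (intro has_derivative_add_const) (simp add: GT_def)
  then show ?thesis by (simp add: Lag_def LsT_eval)
qed

lemma de1: "((\<lambda>V. Lag X H Y lam1 \<rho>1 \<rho>2 \<delta>1 \<delta>2 lam2 \<mu> (Om::real^'m^'r) (U::real^'n^'r) (Q::real^'r^'s) (W::real^'s^'c) V e2 Z1 Z2)
   has_derivative (\<lambda>h. (\<rho>1 *\<^sub>R e1 - Z1 - \<mu> *\<^sub>R (H - Q ** U - e1)) \<bullet> h)) (at e1)"
proof -
  have "((\<lambda>V. LsT X H Y \<rho>1 \<rho>2 \<delta>1 \<delta>2 lam2 \<mu> (Om, U, Q, W, V, e2, Z1, Z2)) has_derivative
     (\<lambda>h. GT X H Y \<rho>1 \<rho>2 \<delta>1 \<delta>2 lam2 \<mu> (Om, U, Q, W, e1, e2, Z1, Z2) \<bullet> (0, 0, 0, 0, h, 0, 0, 0))) (at e1)"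
    by (rule has_derivative_compose[OF _ LsT_deriv]) (auto intro!: derivative_eq_intros simp: zero_prod_def)
  then have "((\<lambda>V. LsT X H Y \<rho>1 \<rho>2 \<delta>1 \<delta>2 lam2 \<mu> (Om, U, Q, W, V, e2, Z1, Z2) + lam1 * l1norm U) has_derivative
     (\<lambda>h. (\<rho>1 *\<^sub>R e1 - Z1 - \<mu> *\<^sub>R (H - Q ** U - e1)) \<bullet> h)) (at e1)"
    by (intro has_derivative_add_const) (simp add: GT_def)
  then show ?thesis by (simp add: Lag_def LsT_eval)
qed

lemma de2: "((\<lambda>V. Lag X H Y lam1 \<rho>1 \<rho>2 \<delta>1 \<delta>2 lam2 \<mu> (Om::real^'m^'r) (U::real^'n^'r) (Q::real^'r^'s) (W::real^'s^'c) e1 V Z1 Z2)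
   has_derivative (\<lambda>h. (\<rho>2 *\<^sub>R e2 - Z2 - \<mu> *\<^sub>R (Y - (W ** Q) ** U - e2)) \<bullet> h)) (at e2)"
proof -
  have "((\<lambda>V. LsT X H Y \<rho>1 \<rho>2 \<delta>1 \<delta>2 lam2 \<mu> (Om, U, Q, W, e1, V, Z1, Z2)) has_derivative
     (\<lambda>h. GT X H Y \<rho>1 \<rho>2 \<delta>1 \<delta>2 lam2 \<mu> (Om, U, Q, W, e1, e2, Z1, Z2) \<bullet> (0, 0, 0, 0, 0, h, 0, 0))) (at e2)"
    by (rule has_derivative_compose[OF _ LsT_deriv]) (auto intro!: derivative_eq_intros simp: zero_prod_def)
  then have "((\<lambda>V. LsT X H Y \<rho>1 \<rho>2 \<delta>1 \<delta>2 lam2 \<mu> (Om, U, Q, W, e1, V, Z1, Z2) + lam1 * l1norm U) has_derivative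
     (\<lambda>h. (\<rho>2 *\<^sub>R e2 - Z2 - \<mu> *\<^sub>R (Y - (W ** Q) ** U - e2)) \<bullet> h)) (at e2)"
    by (intro has_derivative_add_const) (simp add: GT_def)
  then show ?thesis by (simp add: Lag_def LsT_eval)
qed


lemmas exp_simps = Ls_def power2_norm_eq_inner inner_add_left inner_add_right inner_diff_left inner_diff_right
     mm_simps tr_inner1 tr_inner2 tr_inner3 tr_inner4

lemma expU: "Ls X H Y \<rho>1 \<rho>2 \<delta>1 \<delta>2 lam2 \<mu> Om (U + h) Q W e1 e2 Z1 Z2 =
  Ls X H Y \<rho>1 \<rho>2 \<delta>1 \<delta>2 lam2 \<mu> Om U Q W e1 e2 Z1 Z2 + GU X H Y \<mu> Om U Q W e1 e2 Z1 Z2 \<bullet> h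
  + (1/2 * (norm h)^2 + \<mu>/2 * (norm (Q ** h))^2 + \<mu>/2 * (norm ((W ** Q) ** h))^2)"
  apply (simp add: exp_simps GU_def)
  apply (simp add: inner_commute matrix_mul_assoc)
  apply (simp add: field_simps)
  done

lemma expQ: "Ls X H Y \<rho>1 \<rho>2 \<delta>1 \<delta>2 lam2 \<mu> Om U (Q + h) W e1 e2 Z1 Z2 =
  Ls X H Y \<rho>1 \<rho>2 \<delta>1 \<delta>2 lam2 \<mu> Om U Q W e1 e2 Z1 Z2 + GQ H Y \<delta>1 \<mu> U Q W e1 e2 Z1 Z2 \<bullet> h
  + (\<mu>/2 * (norm (h ** U))^2 + \<mu>/2 * (norm ((W ** h) ** U))^2 + \<delta>1/2 * (norm h)^2)"
  apply (simp add: exp_simps GQ_def)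
  apply (simp add: inner_commute matrix_mul_assoc)
  apply (simp add: field_simps)
  done

lemma expW: "Ls X H Y \<rho>1 \<rho>2 \<delta>1 \<delta>2 lam2 \<mu> Om U Q (W + h) e1 e2 Z1 Z2 =
  Ls X H Y \<rho>1 \<rho>2 \<delta>1 \<delta>2 lam2 \<mu> Om U Q W e1 e2 Z1 Z2 + GW Y \<delta>2 \<mu> U Q W e2 Z2 \<bullet> h
  + (\<mu>/2 * (norm ((h ** Q) ** U))^2 + \<delta>2/2 * (norm h)^2)"
  apply (simp add: exp_simps GW_def)
  apply (simp add: inner_commute matrix_mul_assoc)
  apply (simp add: field_simps)
  done

lemma expOm: "Ls X H Y \<rho>1 \<rho>2 \<delta>1 \<delta>2 lam2 \<mu> (Om + h) U Q W e1 e2 Z1 Z2 =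
  Ls X H Y \<rho>1 \<rho>2 \<delta>1 \<delta>2 lam2 \<mu> Om U Q W e1 e2 Z1 Z2 + GOm X lam2 Om U \<bullet> h
  + (1/2 * (norm (h ** X))^2 + lam2/2 * (norm h)^2)"
  apply (simp add: exp_simps GOm_def)
  apply (simp add: inner_commute matrix_mul_assoc)
  apply (simp add: field_simps)
  done

lemma expe1: "Ls X H Y \<rho>1 \<rho>2 \<delta>1 \<delta>2 lam2 \<mu> Om U Q W (e1 + h) e2 Z1 Z2 =
  Ls X H Y \<rho>1 \<rho>2 \<delta>1 \<delta>2 lam2 \<mu> Om U Q W e1 e2 Z1 Z2 + (\<rho>1 *\<^sub>R e1 - Z1 - \<mu> *\<^sub>R (H - Q ** U - e1)) \<bullet> h
  + (\<rho>1 + \<mu>)/2 * (norm h)^2"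
  apply (simp add: exp_simps)
  apply (simp add: inner_commute matrix_mul_assoc)
  apply (simp add: field_simps)
  done

lemma expe2: "Ls X H Y \<rho>1 \<rho>2 \<delta>1 \<delta>2 lam2 \<mu> Om U Q W e1 (e2 + h) Z1 Z2 =
  Ls X H Y \<rho>1 \<rho>2 \<delta>1 \<delta>2 lam2 \<mu> Om U Q W e1 e2 Z1 Z2 + (\<rho>2 *\<^sub>R e2 - Z2 - \<mu> *\<^sub>R (Y - (W ** Q) ** U - e2)) \<bullet> h
  + (\<rho>2 + \<mu>)/2 * (norm h)^2"
  apply (simp add: exp_simps)
  apply (simp add: inner_commute matrix_mul_assoc)
  apply (simp add: field_simps)
  done

lemma expZ: "Ls X H Y \<rho>1 \<rho>2 \<delta>1 \<delta>2 lam2 \<mu> Om U Q W e1 e2 Z1' Z2' =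
  Ls X H Y \<rho>1 \<rho>2 \<delta>1 \<delta>2 lam2 \<mu> Om U Q W e1 e2 Z1 Z2 + (Z1' - Z1) \<bullet> (H - Q ** U - e1)
   + (Z2' - Z2) \<bullet> (Y - (W ** Q) ** U - e2)"
  by (simp add: Ls_def inner_diff_left)


end

lemma soft_min: assumes "t \<ge> 0"
  shows "t * \<bar>soft t x\<bar> + (soft t x - x)^2 / 2 \<le> t * \<bar>w\<bar> + (w - x)^2 / 2"
proof (cases "x \<ge> t")
  case True
  have s: "soft t x = x - t" using True assms by (simp add: soft_def sgn_if)
  have a: "\<bar>x - t\<bar> = x - t" using True by simp
  have b: "(x - t - x)^2 = t^2" by simp
  have c: "t * w \<le> t * \<bar>w\<bar>" using assms by (simp add: mult_left_mono)
  have e: "(w - x + t)^2 = (w-x)^2 + 2*(t*w) - 2*(t*x) + t^2" by (simp add: power2_eq_square algebra_simps)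
  have f: "t*(x-t) = t*x - t^2" by (simp add: power2_eq_square algebra_simps)
  show ?thesis unfolding s a b using c e f zero_le_power2[of "w - x + t"] by linarith
next
  case False
  show ?thesis
  proof (cases "x \<le> - t")
    case True
    have s: "soft t x = x + t" using True False assms by (auto simp: soft_def sgn_if)
    have a: "\<bar>x + t\<bar> = - (x + t)" using True by simp
    have b: "(x + t - x)^2 = t^2" by simp
    have "- w \<le> \<bar>w\<bar>" by simp
    then have "t * (- w) \<le> t * \<bar>w\<bar>" using assms by (rule mult_left_mono)
    then have c: "- (t * w) \<le> t * \<bar>w\<bar>" by simp
    have e: "(w - x - t)^2 = (w-x)^2 - 2*(t*w) + 2*(t*x) + t^2" by (simp add: power2_eq_square algebra_simps)
    have f: "t * (- (x+t)) = - (t*x) - t^2" by (simp add: power2_eq_square algebra_simps)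
    show ?thesis unfolding s a b using c e f zero_le_power2[of "w - x - t"] by linarith
  next
    case F2: False
    have s: "soft t x = 0" using False F2 by (simp add: soft_def)
    have "\<bar>x\<bar> \<le> t" using False F2 by auto
    then have "\<bar>w\<bar> * \<bar>x\<bar> \<le> \<bar>w\<bar> * t" by (simp add: mult_left_mono)
    moreover have "w * x \<le> \<bar>w\<bar> * \<bar>x\<bar>" by (metis abs_ge_self abs_mult)
    ultimately have c: "w * x \<le> t * \<bar>w\<bar>" by (simp add: mult.commute)
    have e: "(w - x)^2 = w^2 - 2*(w*x) + x^2" by (simp add: power2_eq_square algebra_simps)
    have g: "(0 - x)^2 = x^2" by simp
    have h: "t * \<bar>0::real\<bar> = 0" by simp
    have k: "t*\<bar>w\<bar> + (w^2 - 2*(w*x) + x^2)/2 - (0 + x^2/2) = (t*\<bar>w\<bar> - w*x) + w^2/2" by (simp add: field_simps)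
    have "0 \<le> (t*\<bar>w\<bar> - w*x) + w^2/2" using c by simp
    then show ?thesis unfolding s g h e using k by linarith
  qed
qed
lemma norm_diff_sq_mat: "(norm ((V::real^'n^'m) - A))^2 = (\<Sum>i\<in>UNIV. \<Sum>j\<in>UNIV. (V$i$j - A$i$j)^2)"
  by (simp add: norm_mat_sq)

lemma soft_mat_min: assumes "t \<ge> 0"
  shows "t * l1norm (soft_mat t (A::real^'n^'m)) + (norm (soft_mat t A - A))^2 / 2 \<le> t * l1norm V + (norm (V - A))^2 / 2"
proof -
  have "t * l1norm (soft_mat t A) + (norm (soft_mat t A - A))^2 / 2
     = (\<Sum>i\<in>UNIV. \<Sum>j\<in>UNIV. t * \<bar>soft t (A$i$j)\<bar> + (soft t (A$i$j) - A$i$j)^2/2)"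
    by (simp add: l1norm_def norm_diff_sq_mat soft_mat_def sum_distrib_left sum.distrib sum_divide_distrib)
  also have "\<dots> \<le> (\<Sum>i\<in>UNIV. \<Sum>j\<in>UNIV. t * \<bar>V$i$j\<bar> + (V$i$j - A$i$j)^2/2)"
    by (intro sum_mono soft_min assms)
  also have "\<dots> = t * l1norm V + (norm (V - A))^2 / 2"
    by (simp add: l1norm_def norm_diff_sq_mat sum_distrib_left sum.distrib sum_divide_distrib)
  finally show ?thesis .
qed

lemma norm_le_l1norm: "norm (U::real^'n^'m) \<le> l1norm U"
proof -
  have "norm U \<le> (\<Sum>i\<in>UNIV. norm (U$i))"
    unfolding norm_vec_def by (rule L2_set_le_sum) simp
  also have "\<dots> \<le> (\<Sum>i\<in>UNIV. \<Sum>j\<in>UNIV. \<bar>U$i$j\<bar>)"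
    by (intro sum_mono norm_le_l1_cart)
  finally show ?thesis by (simp add: l1norm_def)
qed

lemma l1norm_convex: assumes "0 \<le> s" "s \<le> 1"
  shows "l1norm ((1 - s) *\<^sub>R a + s *\<^sub>R (b::real^'n^'m)) \<le> (1 - s) * l1norm a + s * l1norm b"
proof -
  have "l1norm ((1 - s) *\<^sub>R a + s *\<^sub>R b) = (\<Sum>i\<in>UNIV. \<Sum>j\<in>UNIV. \<bar>(1 - s) * a$i$j + s * b$i$j\<bar>)"
    by (simp add: l1norm_def)
  also have "\<dots> \<le> (\<Sum>i\<in>UNIV. \<Sum>j\<in>UNIV. (1 - s) * \<bar>a$i$j\<bar> + s * \<bar>b$i$j\<bar>)"
  proof (intro sum_mono)
    fix i j
    have "\<bar>(1 - s) * a$i$j + s * b$i$j\<bar> \<le> \<bar>(1 - s) * a$i$j\<bar> + \<bar>s * b$i$j\<bar>" by (rule abs_triangle_ineq)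
    also have "\<dots> = (1 - s) * \<bar>a$i$j\<bar> + s * \<bar>b$i$j\<bar>" using assms by (simp add: abs_mult)
    finally show "\<bar>(1 - s) * a$i$j + s * b$i$j\<bar> \<le> (1 - s) * \<bar>a$i$j\<bar> + s * \<bar>b$i$j\<bar>" .
  qed
  also have "\<dots> = (1 - s) * l1norm a + s * l1norm b"
    by (simp add: l1norm_def sum.distrib sum_distrib_left)
  finally show ?thesis .
qed

lemma tendsto_l1norm: "(f \<longlongrightarrow> (a::real^'n^'m)) F \<Longrightarrow> ((\<lambda>k. l1norm (f k)) \<longlongrightarrow> l1norm a) F"
  unfolding l1norm_def by (intro tendsto_intros)

lemma inner_sq_lb: assumes "\<mu> > 0"
  shows "Z \<bullet> r + \<mu>/2 * (norm r)^2 \<ge> -((norm Z)^2 / (2 * \<mu>))"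
proof -
  have "0 \<le> (norm (Z + \<mu> *\<^sub>R r))^2" by simp
  also have "\<dots> = (norm Z)^2 + 2 * \<mu> * (Z \<bullet> r) + \<mu>^2 * (norm r)^2"
    unfolding power2_norm_eq_inner by (simp add: inner_add_left inner_add_right inner_commute power2_eq_square)
  finally have "0 \<le> (norm Z)^2 + 2 * \<mu> * (Z \<bullet> r) + \<mu>^2 * (norm r)^2" .
  then show ?thesis using assms by (simp add: field_simps power2_eq_square)
qed

lemma Lag_lb:
  assumes "\<mu> > 0" "lam1 \<ge> 0"
  shows "Lag X H Y lam1 \<rho>1 \<rho>2 \<delta>1 \<delta>2 lam2 \<mu> Om U Q W e1 e2 Z1 Z2 \<ge>
    lam1 * norm U + \<delta>1/2 * (norm Q)^2 + \<delta>2/2 * (norm W)^2 + lam2/2 * (norm Om)^2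
    + \<rho>1/2 * (norm e1)^2 + \<rho>2/2 * (norm e2)^2 - (norm Z1)^2 / (2 * \<mu>) - (norm Z2)^2 / (2 * \<mu>)"
proof -
  have a: "Z1 \<bullet> (H - Q ** U - e1) + \<mu>/2 * (norm (H - Q ** U - e1))^2 \<ge> -((norm Z1)^2 / (2 * \<mu>))"
    by (rule inner_sq_lb[OF assms(1)])
  have b: "Z2 \<bullet> (Y - (W ** Q) ** U - e2) + \<mu>/2 * (norm (Y - (W ** Q) ** U - e2))^2 \<ge> -((norm Z2)^2 / (2 * \<mu>))"
    by (rule inner_sq_lb[OF assms(1)])
  have c: "lam1 * norm U \<le> lam1 * l1norm U" by (rule mult_left_mono[OF norm_le_l1norm assms(2)])
  have d: "0 \<le> 1/2 * (norm (U - Om ** X))^2" by simp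
  show ?thesis using a b c d unfolding Lag_def Ls_def by linarith
qed

lemma infdist_tendsto_zero:
  fixes x :: "nat \<Rightarrow> 'a::{heine_borel,real_normed_vector}"
  assumes bnd: "\<And>k. norm (x k) \<le> B"
    and lim: "\<And>r l. strict_mono r \<Longrightarrow> (x \<circ> r) \<longlonglongrightarrow> l \<Longrightarrow> l \<in> S"
  shows "S \<noteq> {}" "(\<lambda>k. infdist (x k) S) \<longlonglongrightarrow> 0"
proof -
  have bx: "bounded (range (f :: nat \<Rightarrow> 'a))" if "\<And>k. norm (f k) \<le> B" for f
    using that by (auto intro!: boundedI)
  obtain l r where "strict_mono r" "(x \<circ> r) \<longlonglongrightarrow> l"
    using bounded_imp_convergent_subsequence[OF bx[of x, OF bnd]] by blast
  then show "S \<noteq> {}" using lim by blast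
  show "(\<lambda>k. infdist (x k) S) \<longlonglongrightarrow> 0"
  proof (rule LIMSEQ_I)
    fix e :: real assume e: "0 < e"
    show "\<exists>N. \<forall>n\<ge>N. norm (infdist (x n) S - 0) < e"
    proof (rule ccontr)
      assume "\<not> (\<exists>N. \<forall>n\<ge>N. norm (infdist (x n) S - 0) < e)"
      then have unb: "\<forall>N. \<exists>n\<ge>N. infdist (x n) S \<ge> e"
        by (auto simp: infdist_nonneg not_less)
      define P where "P = {n. infdist (x n) S \<ge> e}"
      have inf: "infinite P" unfolding P_def infinite_nat_iff_unbounded_le using unb by blast
      define r where "r = enumerate P"
      have smr: "strict_mono r" unfolding r_def strict_mono_def using enumerate_mono[OF _ inf] by blast
      have rP: "\<And>j. infdist (x (r j)) S \<ge> e" using enumerate_in_set[OF inf] unfolding r_def P_def by blast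
      obtain l s where sms: "strict_mono s" and conv: "((x \<circ> r) \<circ> s) \<longlonglongrightarrow> l"
        using bounded_imp_convergent_subsequence[OF bx[of "x \<circ> r"]] bnd by auto
      have lS: "l \<in> S"
        using lim[of "r \<circ> s" l] conv strict_mono_o[OF smr sms] by (simp add: o_assoc)
      have "\<forall>\<^sub>F j in sequentially. dist (((x \<circ> r) \<circ> s) j) l < e"
        using conv e by (rule tendstoD)
      then obtain j where "dist (x (r (s j))) l < e" by (auto dest: eventually_happens)
      moreover have "infdist (x (r (s j))) S \<le> dist (x (r (s j))) l" by (rule infdist_le[OF lS])
      ultimately show False using rP[of "s j"] by linarith
    qed
  qed
qed


lemma norm_sq_add_scaled: "(norm (d + (1/c) *\<^sub>R g))^2 = (norm d)^2 + (2/c) * (g \<bullet> d) + (norm g)^2 / c^2"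
  for d g :: "'a::real_inner"
  unfolding power2_norm_eq_inner
  by (simp add: inner_add_left inner_add_right inner_commute power2_eq_square field_simps)

lemma prox_aux:
  fixes c :: real
  assumes c: "c > 0"
    and h: "(lam1/c)*a + (n + (2/c)*p + G/c^2)/2 \<le> (lam1/c)*b + (n' + (2/c)*p' + G/c^2)/2"
  shows "lam1*a + p + c/2*n \<le> lam1*b + p' + c/2*n'"
proof -
  have "c * ((lam1/c)*a + (n + (2/c)*p + G/c^2)/2) \<le> c * ((lam1/c)*b + (n' + (2/c)*p' + G/c^2)/2)"
    using h c by (simp add: mult_left_mono)
  moreover have "c * ((lam1/c)*a + (n + (2/c)*p + G/c^2)/2) = lam1*a + p + c/2*n + G/(2*c)"
    using c by (simp add: field_simps power2_eq_square)
  moreover have "c * ((lam1/c)*b + (n' + (2/c)*p' + G/c^2)/2) = lam1*b + p' + c/2*n' + G/(2*c)"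
    using c by (simp add: field_simps power2_eq_square)
  ultimately show ?thesis by linarith
qed

lemma prox_ineq:
  fixes U g V :: "real^'n^'m"
  assumes c: "c > 0" and l: "lam1 \<ge> 0"
  shows "lam1 * l1norm (soft_mat (lam1 / c) (U - (1/c) *\<^sub>R g))
     + g \<bullet> (soft_mat (lam1 / c) (U - (1/c) *\<^sub>R g) - U)
     + c/2 * (norm (soft_mat (lam1 / c) (U - (1/c) *\<^sub>R g) - U))^2
   \<le> lam1 * l1norm V + g \<bullet> (V - U) + c/2 * (norm (V - U))^2"
proof -
  define A where "A = U - (1/c) *\<^sub>R g"
  define U' where "U' = soft_mat (lam1 / c) A"
  have m: "(lam1/c) * l1norm U' + (norm (U' - A))^2/2 \<le> (lam1/c) * l1norm V + (norm (V - A))^2/2"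
    unfolding U'_def by (rule soft_mat_min) (use c l in simp)
  have e1: "U' - A = (U' - U) + (1/c) *\<^sub>R g" unfolding A_def by simp
  have e2: "V - A = (V - U) + (1/c) *\<^sub>R g" unfolding A_def by simp
  have "(lam1/c) * l1norm U' + ((norm (U' - U))^2 + (2/c) * (g \<bullet> (U' - U)) + (norm g)^2 / c^2)/2
     \<le> (lam1/c) * l1norm V + ((norm (V - U))^2 + (2/c) * (g \<bullet> (V - U)) + (norm g)^2 / c^2)/2"
    using m unfolding e1 e2 norm_sq_add_scaled .
  then have "lam1 * l1norm U' + g \<bullet> (U' - U) + c/2 * (norm (U' - U))^2
     \<le> lam1 * l1norm V + g \<bullet> (V - U) + c/2 * (norm (V - U))^2"
    by (rule prox_aux[OF c])
  then show ?thesis unfolding U'_def A_def by simp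
qed

lemma subgrad_from_prox:
  fixes u g :: "real^'n^'m"
  assumes l: "lam1 > 0" and c: "c \<ge> 0"
    and min: "\<And>V. lam1 * l1norm u \<le> lam1 * l1norm V + g \<bullet> (V - u) + c/2 * (norm (V - u))^2"
  shows "l1norm u + (- (1/lam1) *\<^sub>R g) \<bullet> (y - u) \<le> l1norm y"
proof -
  define d where "d = y - u"
  define a where "a = lam1 * l1norm y - lam1 * l1norm u + g \<bullet> d"
  have key: "0 \<le> a + c * s / 2 * (norm d)^2" if s: "0 < s" "s \<le> 1" for s
  proof -
    have V: "u + s *\<^sub>R d = (1 - s) *\<^sub>R u + s *\<^sub>R y" unfolding d_def by (simp add: algebra_simps)
    have cv: "lam1 * l1norm (u + s *\<^sub>R d) \<le> (1 - s) * (lam1 * l1norm u) + s * (lam1 * l1norm y)"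
      unfolding V using mult_left_mono[OF l1norm_convex[of s u y] less_imp_le[OF l]] s
      by (simp add: algebra_simps)
    have "lam1 * l1norm u \<le> lam1 * l1norm (u + s *\<^sub>R d) + g \<bullet> (s *\<^sub>R d) + c/2 * (norm (s *\<^sub>R d))^2"
      using min[of "u + s *\<^sub>R d"] by simp
    also have "\<dots> \<le> (1 - s) * (lam1 * l1norm u) + s * (lam1 * l1norm y) + s * (g \<bullet> d) + c/2 * s^2 * (norm d)^2"
      using cv s by (simp add: power_mult_distrib)
    finally have "0 \<le> s * (lam1 * l1norm y - lam1 * l1norm u + g \<bullet> d) + s * (c/2 * s * (norm d)^2)"
      by (simp add: algebra_simps power2_eq_square)
    then have "0 \<le> s * (a + c * s / 2 * (norm d)^2)" unfolding a_def by (simp add: algebra_simps)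
    then show ?thesis using s by (simp add: zero_le_mult_iff)
  qed
  have "a \<ge> 0"
  proof (rule ccontr)
    assume na: "\<not> a \<ge> 0"
    define s where "s = min 1 (- a / (c * (norm d)^2 + 1))"
    have dpos: "c * (norm d)^2 + 1 > 0" using c by (simp add: add_nonneg_pos)
    have "- a / (c * (norm d)^2 + 1) > 0" using na dpos by (intro divide_pos_pos) auto
    then have s0: "0 < s" unfolding s_def by simp
    have s1: "s \<le> 1" unfolding s_def by simp
    have "s \<le> - a / (c * (norm d)^2 + 1)" unfolding s_def by simp
    then have "s * (c * (norm d)^2 + 1) \<le> - a" using dpos by (simp add: field_simps)
    then have "c * s * (norm d)^2 < - a" using s0 by (simp add: algebra_simps)
    moreover have "c * s / 2 * (norm d)^2 \<le> c * s * (norm d)^2"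
      using s0 c by (simp add: mult_nonneg_nonneg)
    ultimately show False using key[OF s0 s1] by linarith
  qed
  then have "lam1 * (l1norm u - (1/lam1) * (g \<bullet> d)) \<le> lam1 * l1norm y"
    unfolding a_def using l by (simp add: algebra_simps)
  then have "l1norm u - (1/lam1) * (g \<bullet> d) \<le> l1norm y" using l by simp
  then show ?thesis unfolding d_def by simp
qed

lemma norm_sq_mm: "(norm ((A::real^'k^'m) ** (B::real^'p^'k)))^2 \<le> (norm A)^2 * (norm B)^2"
proof -
  have "(norm (A ** B))^2 \<le> (norm A * norm B)^2"
    by (rule power_mono[OF norm_mm_le]) simp
  then show ?thesis by (simp add: power_mult_distrib)
qed

locale admm_data =
  fixes X :: "real^'n^'m" and H :: "real^'n^'s" and Y :: "real^'n^'c"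
    and lam1 lam2 \<rho>1 \<rho>2 \<delta>1 \<delta>2 \<mu> :: real
    and Om0 :: "real^'m^'r" and U0 :: "real^'n^'r" and Q0 :: "real^'r^'s" and W0 :: "real^'s^'c"
    and E10 :: "real^'n^'s" and E20 :: "real^'n^'c" and Z10 :: "real^'n^'s" and Z20 :: "real^'n^'c"
  assumes pos: "lam1 > 0" "lam2 > 0" "\<rho>1 > 0" "\<rho>2 > 0" "\<delta>1 > 0" "\<delta>2 > 0" "\<mu> > 0"
    and mu_ge: "\<mu> \<ge> sqrt 2 * max \<rho>1 \<rho>2"
begin

abbreviation "LL \<equiv> Lag X H Y lam1 \<rho>1 \<rho>2 \<delta>1 \<delta>2 lam2 \<mu>"

definition "Lam0 = LL Om0 U0 Q0 W0 E10 E20 Z10 Z20"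
definition "K0 = ((norm Z10)^2 + (norm Z20)^2) / (2*\<mu>)"
definition "A0 = Lam0 + K0"
definition "Lam = Lam0 + (2*\<rho>1^2*(2*A0/\<rho>1) + 2*(norm Z10)^2 + 2*\<rho>2^2*(2*A0/\<rho>2) + 2*(norm Z20)^2)/\<mu>"
definition "AA = Lam + K0"
definition "bu = AA/lam1"
definition "bq = 2*AA/\<delta>1"
definition "bw = 2*AA/\<delta>2"
definition "MU = 1 + \<mu>*bq + \<mu>*bw*bq"
definition "MQ = \<mu>*bu^2 + \<mu>*bw*bu^2 + \<delta>1"
definition "MW = \<mu>*bq*bu^2 + \<delta>2"
definition "etaU0 = (MU + 1)/\<mu>"
definition "etaQ0 = (MQ + 1)/\<mu>"
definition "etaW0 = (MW + 1)/\<mu>"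
definition "Sq = (Lam/lam1)^2 + 2*Lam/\<delta>1 + 2*Lam/\<delta>2 + 2*Lam/lam2 + 8*Lam/\<rho>1 + 8*Lam/\<rho>2 + 8*\<rho>1*Lam + 8*\<rho>2*Lam"
definition "RR = Sq + 2"

lemma K0_nn: "K0 \<ge> 0" using pos unfolding K0_def by simp

lemma A0_nn: "A0 \<ge> 0"
proof -
  have "Lam0 \<ge> lam1 * norm U0 + \<delta>1/2 * (norm Q0)^2 + \<delta>2/2 * (norm W0)^2 + lam2/2 * (norm Om0)^2
    + \<rho>1/2 * (norm E10)^2 + \<rho>2/2 * (norm E20)^2 - (norm Z10)^2 / (2 * \<mu>) - (norm Z20)^2 / (2 * \<mu>)"
    unfolding Lam0_def by (rule Lag_lb) (use pos in auto)
  moreover have "0 \<le> lam1 * norm U0 + \<delta>1/2 * (norm Q0)^2 + \<delta>2/2 * (norm W0)^2 + lam2/2 * (norm Om0)^2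
    + \<rho>1/2 * (norm E10)^2 + \<rho>2/2 * (norm E20)^2" using pos by simp
  ultimately show ?thesis unfolding A0_def K0_def by (simp add: add_divide_distrib)
qed

lemma Lam_ge: "Lam \<ge> Lam0"
  unfolding Lam_def using pos A0_nn by (simp add: divide_nonneg_pos)

lemma Lam_nn: "Lam \<ge> 0"
proof -
  have "Lam \<ge> Lam0 + (2*(norm Z10)^2 + 2*(norm Z20)^2)/\<mu>"
    unfolding Lam_def using pos A0_nn by (simp add: divide_right_mono)
  moreover have "Lam0 \<ge> - K0" using A0_nn unfolding A0_def by simp
  moreover have "K0 \<le> (2*(norm Z10)^2 + 2*(norm Z20)^2)/\<mu>"
    unfolding K0_def using pos by (simp add: field_simps)
  ultimately show ?thesis by linarith
qed

lemma AA_nn: "AA \<ge> 0" unfolding AA_def using Lam_nn K0_nn by simp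
lemma bu_nn: "bu \<ge> 0" unfolding bu_def using AA_nn pos by simp
lemma bq_nn: "bq \<ge> 0" unfolding bq_def using AA_nn pos by simp
lemma bw_nn: "bw \<ge> 0" unfolding bw_def using AA_nn pos by simp
lemma MU_nn: "MU \<ge> 0" unfolding MU_def using bq_nn bw_nn pos by simp
lemma MQ_nn: "MQ \<ge> 0" unfolding MQ_def using bu_nn bw_nn pos by simp
lemma MW_nn: "MW \<ge> 0" unfolding MW_def using bu_nn bq_nn pos by simp
lemma etas_pos: "etaU0 > 0" "etaQ0 > 0" "etaW0 > 0"
  unfolding etaU0_def etaQ0_def etaW0_def using MU_nn MQ_nn MW_nn pos by simp_all
lemma Sq_nn: "Sq \<ge> 0" unfolding Sq_def using Lam_nn pos by simp
lemma RR_pos: "RR > 0" unfolding RR_def using Sq_nn by simp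

lemma rho_le: "4 * \<rho>1 \<le> 3 * \<mu>" "4 * \<rho>2 \<le> 3 * \<mu>" "\<rho>1^2 \<le> \<mu>^2/2" "\<rho>2^2 \<le> \<mu>^2/2"
proof -
  have s: "4/3 \<le> sqrt 2" by (rule real_le_rsqrt) (simp add: power2_eq_square)
  have m1: "\<mu> \<ge> sqrt 2 * \<rho>1" using mu_ge pos
    by (meson max.cobounded1 mult_left_mono order_trans real_sqrt_ge_zero zero_le_numeral)
  have m2: "\<mu> \<ge> sqrt 2 * \<rho>2" using mu_ge pos
    by (meson max.cobounded2 mult_left_mono order_trans real_sqrt_ge_zero zero_le_numeral)
  have "4/3 * \<rho>1 \<le> sqrt 2 * \<rho>1" using s pos by (simp add: mult_right_mono)
  then show "4 * \<rho>1 \<le> 3 * \<mu>" using m1 by linarith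
  have "4/3 * \<rho>2 \<le> sqrt 2 * \<rho>2" using s pos by (simp add: mult_right_mono)
  then show "4 * \<rho>2 \<le> 3 * \<mu>" using m2 by linarith
  have "(sqrt 2 * \<rho>1)^2 \<le> \<mu>^2" using m1 pos by (intro power_mono) auto
  then show "\<rho>1^2 \<le> \<mu>^2/2" by (simp add: power_mult_distrib)
  have "(sqrt 2 * \<rho>2)^2 \<le> \<mu>^2" using m2 pos by (intro power_mono) auto
  then show "\<rho>2^2 \<le> \<mu>^2/2" by (simp add: power_mult_distrib)
qed

lemma e_coef: assumes "r > 0" "4 * r \<le> 3 * \<mu>" and that: "x \<ge> 0"
  shows "r/2 * x - (r^2 * x) / (2*\<mu>) \<ge> r/8 * x"
proof -
  have "r^2 / (2*\<mu>) \<le> 3*r/8"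
    using assms pos by (simp add: field_simps power2_eq_square)
  then have "r^2 / (2*\<mu>) * x \<le> 3*r/8 * x" using that by (rule mult_right_mono)
  moreover have "(r^2 * x) / (2*\<mu>) = r^2 / (2*\<mu>) * x" by simp
  ultimately show ?thesis by linarith
qed

lemma coupled_lb:
  assumes "Z1 = \<rho>1 *\<^sub>R e1" "Z2 = \<rho>2 *\<^sub>R e2"
  shows "LL Om U Q W e1 e2 Z1 Z2 \<ge> lam1 * norm U + \<delta>1/2 * (norm Q)^2 + \<delta>2/2 * (norm W)^2
     + lam2/2 * (norm Om)^2 + \<rho>1/8 * (norm e1)^2 + \<rho>2/8 * (norm e2)^2"
proof -
  have lb: "LL Om U Q W e1 e2 Z1 Z2 \<ge> lam1 * norm U + \<delta>1/2 * (norm Q)^2 + \<delta>2/2 * (norm W)^2 + lam2/2 * (norm Om)^2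
    + \<rho>1/2 * (norm e1)^2 + \<rho>2/2 * (norm e2)^2 - (norm Z1)^2 / (2 * \<mu>) - (norm Z2)^2 / (2 * \<mu>)"
    by (rule Lag_lb) (use pos in auto)
  have z1: "(norm Z1)^2 = \<rho>1^2 * (norm e1)^2" using assms pos by (simp add: power_mult_distrib)
  have z2: "(norm Z2)^2 = \<rho>2^2 * (norm e2)^2" using assms pos by (simp add: power_mult_distrib)
  have c1: "\<rho>1/2 * (norm e1)^2 - (\<rho>1^2 * (norm e1)^2) / (2*\<mu>) \<ge> \<rho>1/8 * (norm e1)^2"
    by (rule e_coef) (use pos rho_le in auto)
  have c2: "\<rho>2/2 * (norm e2)^2 - (\<rho>2^2 * (norm e2)^2) / (2*\<mu>) \<ge> \<rho>2/8 * (norm e2)^2"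
    by (rule e_coef) (use pos rho_le in auto)
  show ?thesis using lb c1 c2 unfolding z1 z2 by linarith
qed

lemma coupled_nn:
  assumes "Z1 = \<rho>1 *\<^sub>R e1" "Z2 = \<rho>2 *\<^sub>R e2"
  shows "LL Om U Q W e1 e2 Z1 Z2 \<ge> 0"
proof -
  have "0 \<le> lam1 * norm U" "0 \<le> \<delta>1/2 * (norm Q)^2" "0 \<le> \<delta>2/2 * (norm W)^2" "0 \<le> lam2/2 * (norm Om)^2"
    "0 \<le> \<rho>1/8 * (norm e1)^2" "0 \<le> \<rho>2/8 * (norm e2)^2" using pos by auto
  then show ?thesis using coupled_lb[OF assms, where Om=Om and U=U and Q=Q and W=W] by linarith
qed

lemma bounds:
  assumes L: "LL Om U Q W e1 e2 Z1 Z2 \<le> Lam"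
    and Z: "(Z1 = Z10 \<and> Z2 = Z20) \<or> (Z1 = \<rho>1 *\<^sub>R e1 \<and> Z2 = \<rho>2 *\<^sub>R e2)"
  shows "norm U \<le> bu" "(norm Q)^2 \<le> bq" "(norm W)^2 \<le> bw"
proof -
  have "lam1 * norm U + \<delta>1/2 * (norm Q)^2 + \<delta>2/2 * (norm W)^2 \<le> AA"
    using Z
  proof
    assume z: "Z1 = Z10 \<and> Z2 = Z20"
    have lb: "LL Om U Q W e1 e2 Z1 Z2 \<ge> lam1 * norm U + \<delta>1/2 * (norm Q)^2 + \<delta>2/2 * (norm W)^2 + lam2/2 * (norm Om)^2
      + \<rho>1/2 * (norm e1)^2 + \<rho>2/2 * (norm e2)^2 - (norm Z1)^2 / (2 * \<mu>) - (norm Z2)^2 / (2 * \<mu>)"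
      by (rule Lag_lb) (use pos in auto)
    have "0 \<le> lam2/2 * (norm Om)^2 + \<rho>1/2 * (norm e1)^2 + \<rho>2/2 * (norm e2)^2" using pos by simp
    moreover have "(norm Z1)^2 / (2 * \<mu>) + (norm Z2)^2 / (2 * \<mu>) = K0" using z unfolding K0_def by (simp add: add_divide_distrib)
    ultimately show ?thesis using lb L unfolding AA_def by linarith
  next
    assume z: "Z1 = \<rho>1 *\<^sub>R e1 \<and> Z2 = \<rho>2 *\<^sub>R e2"
    have "0 \<le> lam2/2 * (norm Om)^2 + \<rho>1/8 * (norm e1)^2 + \<rho>2/8 * (norm e2)^2" using pos by simp
    then show ?thesis using coupled_lb[OF conjunct1[OF z] conjunct2[OF z], where Om=Om and U=U and Q=Q and W=W] z L K0_nn unfolding AA_def by linarith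
  qed
  moreover have "0 \<le> lam1 * norm U" "0 \<le> \<delta>1/2 * (norm Q)^2" "0 \<le> \<delta>2/2 * (norm W)^2" using pos by auto
  ultimately have u: "lam1 * norm U \<le> AA" and q: "\<delta>1/2 * (norm Q)^2 \<le> AA" and w: "\<delta>2/2 * (norm W)^2 \<le> AA"
    by linarith+
  show "norm U \<le> bu" unfolding bu_def using u pos by (simp add: field_simps)
  show "(norm Q)^2 \<le> bq" unfolding bq_def using q pos by (simp add: field_simps)
  show "(norm W)^2 \<le> bw" unfolding bw_def using w pos by (simp add: field_simps)
qed

lemma norm_tuple_sq:
  "(norm (a, b, c, d, e, f, g, h))^2 = (norm a)^2 + (norm b)^2 + (norm c)^2 + (norm d)^2 + (norm e)^2 + (norm f)^2 + (norm g)^2 + (norm h)^2"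
  by (simp add: norm_Pair)

lemma coupled_norm:
  assumes L: "LL Om U Q W e1 e2 Z1 Z2 \<le> Lam" and z: "Z1 = \<rho>1 *\<^sub>R e1" "Z2 = \<rho>2 *\<^sub>R e2"
  shows "(norm (Om, U, Q, W, e1, e2, Z1, Z2))^2 \<le> Sq"
proof -
  note lb = coupled_lb[OF z, where Om=Om and U=U and Q=Q and W=W]
  have t: "0 \<le> lam1 * norm U" "0 \<le> \<delta>1/2 * (norm Q)^2" "0 \<le> \<delta>2/2 * (norm W)^2" "0 \<le> lam2/2 * (norm Om)^2"
    "0 \<le> \<rho>1/8 * (norm e1)^2" "0 \<le> \<rho>2/8 * (norm e2)^2" using pos by auto
  have u: "lam1 * norm U \<le> Lam" and q: "\<delta>1/2 * (norm Q)^2 \<le> Lam" and w: "\<delta>2/2 * (norm W)^2 \<le> Lam"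
    and o: "lam2/2 * (norm Om)^2 \<le> Lam" and e1: "\<rho>1/8 * (norm e1)^2 \<le> Lam" and e2: "\<rho>2/8 * (norm e2)^2 \<le> Lam"
    using lb L t by linarith+
  have "norm U \<le> Lam/lam1" using u pos by (simp add: field_simps)
  then have U2: "(norm U)^2 \<le> (Lam/lam1)^2" by (intro power_mono) auto
  have Q2: "(norm Q)^2 \<le> 2*Lam/\<delta>1" using q pos by (simp add: field_simps)
  have W2: "(norm W)^2 \<le> 2*Lam/\<delta>2" using w pos by (simp add: field_simps)
  have O2: "(norm Om)^2 \<le> 2*Lam/lam2" using o pos by (simp add: field_simps)
  have E1: "(norm e1)^2 \<le> 8*Lam/\<rho>1" using e1 pos by (simp add: field_simps)
  have E2: "(norm e2)^2 \<le> 8*Lam/\<rho>2" using e2 pos by (simp add: field_simps)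
  have Z1: "(norm Z1)^2 \<le> 8*\<rho>1*Lam"
  proof -
    have "(norm Z1)^2 = \<rho>1^2 * (norm e1)^2" using z pos by (simp add: power_mult_distrib)
    also have "\<dots> \<le> \<rho>1^2 * (8*Lam/\<rho>1)" using mult_left_mono[OF E1, of "\<rho>1^2"] by simp
    also have "\<dots> = 8*\<rho>1*Lam" using pos by (simp add: power2_eq_square)
    finally show ?thesis .
  qed
  have Z2: "(norm Z2)^2 \<le> 8*\<rho>2*Lam"
  proof -
    have "(norm Z2)^2 = \<rho>2^2 * (norm e2)^2" using z pos by (simp add: power_mult_distrib)
    also have "\<dots> \<le> \<rho>2^2 * (8*Lam/\<rho>2)" using mult_left_mono[OF E2, of "\<rho>2^2"] by simp
    also have "\<dots> = 8*\<rho>2*Lam" using pos by (simp add: power2_eq_square)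
    finally show ?thesis .
  qed
  show ?thesis unfolding norm_tuple_sq Sq_def using U2 Q2 W2 O2 E1 E2 Z1 Z2 by linarith
qed

end

lemma eq_from_diff: "(a::'a::ab_group_add) - b - c = 0 \<Longrightarrow> a = b + c"
  by (metis diff_diff_eq eq_iff_diff_eq_0)

locale admm_run = admm_data X H Y lam1 lam2 \<rho>1 \<rho>2 \<delta>1 \<delta>2 \<mu> Om0 U0 Q0 W0 E10 E20 Z10 Z20
  for X :: "real^'n^'m" and H :: "real^'n^'s" and Y :: "real^'n^'c"
    and lam1 lam2 \<rho>1 \<rho>2 \<delta>1 \<delta>2 \<mu> :: real
    and Om0 :: "real^'m^'r" and U0 :: "real^'n^'r" and Q0 :: "real^'r^'s" and W0 :: "real^'s^'c"
    and E10 :: "real^'n^'s" and E20 :: "real^'n^'c" and Z10 :: "real^'n^'s" and Z20 :: "real^'n^'c" +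
  fixes \<eta>U \<eta>Q \<eta>W :: real
    and Om :: "nat \<Rightarrow> real^'m^'r" and U :: "nat \<Rightarrow> real^'n^'r" and Q :: "nat \<Rightarrow> real^'r^'s"
    and W :: "nat \<Rightarrow> real^'s^'c" and E1 :: "nat \<Rightarrow> real^'n^'s" and E2 :: "nat \<Rightarrow> real^'n^'c"
    and Z1 :: "nat \<Rightarrow> real^'n^'s" and Z2 :: "nat \<Rightarrow> real^'n^'c"
  assumes eta: "\<eta>U > etaU0" "\<eta>Q > etaQ0" "\<eta>W > etaW0"
    and init: "Om 0 = Om0" "U 0 = U0" "Q 0 = Q0" "W 0 = W0"
       "E1 0 = E10" "E2 0 = E20" "Z1 0 = Z10" "Z2 0 = Z20"
    and it: "\<And>k. U (Suc k) = soft_mat (lam1 / (\<mu> * \<eta>U))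
            (U k - (1 / (\<mu> * \<eta>U)) *\<^sub>R
               grad (\<lambda>V. Ls X H Y \<rho>1 \<rho>2 \<delta>1 \<delta>2 lam2 \<mu>
                        (Om k) V (Q k) (W k) (E1 k) (E2 k) (Z1 k) (Z2 k)) (U k))
        \<and> Q (Suc k) = Q k - (1 / (\<mu> * \<eta>Q)) *\<^sub>R
               grad (\<lambda>V. Lag X H Y lam1 \<rho>1 \<rho>2 \<delta>1 \<delta>2 lam2 \<mu>
                        (Om k) (U (Suc k)) V (W k) (E1 k) (E2 k) (Z1 k) (Z2 k)) (Q k)
        \<and> W (Suc k) = W k - (1 / (\<mu> * \<eta>W)) *\<^sub>R
               grad (\<lambda>V. Lag X H Y lam1 \<rho>1 \<rho>2 \<delta>1 \<delta>2 lam2 \<mu>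
                        (Om k) (U (Suc k)) (Q (Suc k)) V (E1 k) (E2 k) (Z1 k) (Z2 k)) (W k)
        \<and> (\<forall>V. Lag X H Y lam1 \<rho>1 \<rho>2 \<delta>1 \<delta>2 lam2 \<mu>
                  (Om (Suc k)) (U (Suc k)) (Q (Suc k)) (W (Suc k)) (E1 k) (E2 k) (Z1 k) (Z2 k)
                \<le> Lag X H Y lam1 \<rho>1 \<rho>2 \<delta>1 \<delta>2 lam2 \<mu>
                  V (U (Suc k)) (Q (Suc k)) (W (Suc k)) (E1 k) (E2 k) (Z1 k) (Z2 k))
        \<and> (\<forall>V. Lag X H Y lam1 \<rho>1 \<rho>2 \<delta>1 \<delta>2 lam2 \<mu>
                  (Om (Suc k)) (U (Suc k)) (Q (Suc k)) (W (Suc k)) (E1 (Suc k)) (E2 k) (Z1 k) (Z2 k)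
                \<le> Lag X H Y lam1 \<rho>1 \<rho>2 \<delta>1 \<delta>2 lam2 \<mu>
                  (Om (Suc k)) (U (Suc k)) (Q (Suc k)) (W (Suc k)) V (E2 k) (Z1 k) (Z2 k))
        \<and> (\<forall>V. Lag X H Y lam1 \<rho>1 \<rho>2 \<delta>1 \<delta>2 lam2 \<mu>
                  (Om (Suc k)) (U (Suc k)) (Q (Suc k)) (W (Suc k)) (E1 (Suc k)) (E2 (Suc k)) (Z1 k) (Z2 k)
                \<le> Lag X H Y lam1 \<rho>1 \<rho>2 \<delta>1 \<delta>2 lam2 \<mu>
                  (Om (Suc k)) (U (Suc k)) (Q (Suc k)) (W (Suc k)) (E1 (Suc k)) V (Z1 k) (Z2 k))
        \<and> Z1 (Suc k) = Z1 k + \<mu> *\<^sub>R (H - Q (Suc k) ** U (Suc k) - E1 (Suc k))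
        \<and> Z2 (Suc k) = Z2 k + \<mu> *\<^sub>R (Y - (W (Suc k) ** Q (Suc k)) ** U (Suc k) - E2 (Suc k))"
begin

abbreviation "Ls' \<equiv> Ls X H Y \<rho>1 \<rho>2 \<delta>1 \<delta>2 lam2 \<mu>"

definition "gU k = GU X H Y \<mu> (Om k) (U k) (Q k) (W k) (E1 k) (E2 k) (Z1 k) (Z2 k)"
definition "gQ k = GQ H Y \<delta>1 \<mu> (U (Suc k)) (Q k) (W k) (E1 k) (E2 k) (Z1 k) (Z2 k)"
definition "gW k = GW Y \<delta>2 \<mu> (U (Suc k)) (Q (Suc k)) (W k) (E2 k) (Z2 k)"

lemma cU: "\<mu> * \<eta>U \<ge> MU + 1" and cQ: "\<mu> * \<eta>Q \<ge> MQ + 1" and cW: "\<mu> * \<eta>W \<ge> MW + 1"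
  using eta pos(7) unfolding etaU0_def etaQ0_def etaW0_def by (simp_all add: field_simps)

lemma cpos: "\<mu> * \<eta>U > 0" "\<mu> * \<eta>Q > 0" "\<mu> * \<eta>W > 0"
  using cU cQ cW MU_nn MQ_nn MW_nn by linarith+

lemma Ustep: "U (Suc k) = soft_mat (lam1 / (\<mu> * \<eta>U)) (U k - (1 / (\<mu> * \<eta>U)) *\<^sub>R gU k)"
  using it[of k] unfolding gU_def grad_eqI[OF dU] by blast

lemma Qstep: "Q (Suc k) = Q k - (1 / (\<mu> * \<eta>Q)) *\<^sub>R gQ k"
  using it[of k] unfolding gQ_def grad_eqI[OF dQ] by blast

lemma Wstep: "W (Suc k) = W k - (1 / (\<mu> * \<eta>W)) *\<^sub>R gW k"
  using it[of k] unfolding gW_def grad_eqI[OF dW] by blast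

lemma Om_opt: "GOm X lam2 (Om (Suc k)) (U (Suc k)) = 0"
  by (rule deriv_zero_min[OF dOm]) (use it[of k] in blast)

lemma e1_opt: "\<rho>1 *\<^sub>R E1 (Suc k) - Z1 k - \<mu> *\<^sub>R (H - Q (Suc k) ** U (Suc k) - E1 (Suc k)) = 0"
  by (rule deriv_zero_min[OF de1]) (use it[of k] in blast)

lemma e2_opt: "\<rho>2 *\<^sub>R E2 (Suc k) - Z2 k - \<mu> *\<^sub>R (Y - (W (Suc k) ** Q (Suc k)) ** U (Suc k) - E2 (Suc k)) = 0"
  by (rule deriv_zero_min[OF de2]) (use it[of k] in blast)

lemma Z1step: "Z1 (Suc k) = Z1 k + \<mu> *\<^sub>R (H - Q (Suc k) ** U (Suc k) - E1 (Suc k))"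
  using it[of k] by blast
lemma Z2step: "Z2 (Suc k) = Z2 k + \<mu> *\<^sub>R (Y - (W (Suc k) ** Q (Suc k)) ** U (Suc k) - E2 (Suc k))"
  using it[of k] by blast

lemma Z1_coupled: "Z1 (Suc k) = \<rho>1 *\<^sub>R E1 (Suc k)"
  using eq_from_diff[OF e1_opt[of k]] Z1step[of k] by simp
lemma Z2_coupled: "Z2 (Suc k) = \<rho>2 *\<^sub>R E2 (Suc k)"
  using eq_from_diff[OF e2_opt[of k]] Z2step[of k] by simp


lemma l1_nn: "lam1 \<ge> 0" using pos by simp

lemma DU:
  assumes q: "(norm (Q k))^2 \<le> bq" and w: "(norm (W k))^2 \<le> bw"
  shows "LL (Om k) (U (Suc k)) (Q k) (W k) (E1 k) (E2 k) (Z1 k) (Z2 k) + 1/2 * (norm (U (Suc k) - U k))^2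
     \<le> LL (Om k) (U k) (Q k) (W k) (E1 k) (E2 k) (Z1 k) (Z2 k)"
proof -
  define c where "c = \<mu> * \<eta>U"
  define d where "d = U (Suc k) - U k"
  define n where "n = (norm d)^2"
  have c0: "c > 0" and c1: "c \<ge> MU + 1" unfolding c_def using cpos cU by auto
  have p: "lam1 * l1norm (U (Suc k)) + gU k \<bullet> d + c/2 * n \<le> lam1 * l1norm (U k)"
    using prox_ineq[OF c0 l1_nn, of "U k" "gU k" "U k"] unfolding Ustep[of k, folded c_def, symmetric] d_def n_def
    by simp
  have ex: "Ls' (Om k) (U (Suc k)) (Q k) (W k) (E1 k) (E2 k) (Z1 k) (Z2 k) = Ls' (Om k) (U k) (Q k) (W k) (E1 k) (E2 k) (Z1 k) (Z2 k)
     + gU k \<bullet> d + (1/2 * n + \<mu>/2 * (norm (Q k ** d))^2 + \<mu>/2 * (norm ((W k ** Q k) ** d))^2)"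
    using expU[of X H Y \<rho>1 \<rho>2 \<delta>1 \<delta>2 lam2 \<mu> "Om k" "U k" d "Q k" "W k" "E1 k" "E2 k" "Z1 k" "Z2 k"]
    unfolding d_def n_def gU_def by simp
  have n0: "n \<ge> 0" unfolding n_def by simp
  have a1: "(norm (Q k ** d))^2 \<le> bq * n"
    using order_trans[OF norm_sq_mm mult_right_mono[OF q]] unfolding n_def by simp
  have a2: "(norm ((W k ** Q k) ** d))^2 \<le> bw * bq * n"
  proof -
    have "(norm ((W k ** Q k) ** d))^2 \<le> (norm (W k ** Q k))^2 * n" unfolding n_def by (rule norm_sq_mm)
    also have "\<dots> \<le> ((norm (W k))^2 * (norm (Q k))^2) * n" by (intro mult_right_mono norm_sq_mm n0)
    also have "\<dots> \<le> (bw * bq) * n" using bw_nn by (intro mult_right_mono mult_mono w q n0) auto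
    finally show ?thesis by simp
  qed
  have b1: "\<mu>/2 * (norm (Q k ** d))^2 \<le> \<mu>/2 * (bq * n)" using a1 pos by (simp add: mult_left_mono)
  have b2: "\<mu>/2 * (norm ((W k ** Q k) ** d))^2 \<le> \<mu>/2 * (bw * bq * n)" using a2 pos by (simp add: mult_left_mono)
  have eqM: "MU * n / 2 = 1/2 * n + \<mu>/2 * (bq * n) + \<mu>/2 * (bw * bq * n)" unfolding MU_def by (simp add: algebra_simps)
  have cn: "(MU + 1) * n \<le> c * n" using c1 n0 by (rule mult_right_mono)
  have cn': "MU * n + n \<le> c * n" using cn by (simp add: algebra_simps)
  have "c/2 * n = c * n / 2" by simp
  then show ?thesis unfolding Lag_def using p ex b1 b2 eqM cn' n0 unfolding n_def d_def by linarith
qed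

lemma DQ:
  assumes u: "norm (U (Suc k)) \<le> bu" and w: "(norm (W k))^2 \<le> bw"
  shows "LL (Om k) (U (Suc k)) (Q (Suc k)) (W k) (E1 k) (E2 k) (Z1 k) (Z2 k) + 1/2 * (norm (Q (Suc k) - Q k))^2
     \<le> LL (Om k) (U (Suc k)) (Q k) (W k) (E1 k) (E2 k) (Z1 k) (Z2 k)"
proof -
  define c where "c = \<mu> * \<eta>Q"
  define d where "d = Q (Suc k) - Q k"
  define n where "n = (norm d)^2"
  have c0: "c > 0" and c1: "c \<ge> MQ + 1" unfolding c_def using cpos cQ by auto
  have dg: "d = - (1/c) *\<^sub>R gQ k" unfolding d_def c_def using Qstep[of k] by simp
  have gd: "gQ k \<bullet> d = - c * n"
  proof -
    have "gQ k = - c *\<^sub>R d" using dg c0 by simp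
    then show ?thesis unfolding n_def by (simp add: power2_norm_eq_inner)
  qed
  have ex: "Ls' (Om k) (U (Suc k)) (Q (Suc k)) (W k) (E1 k) (E2 k) (Z1 k) (Z2 k) = Ls' (Om k) (U (Suc k)) (Q k) (W k) (E1 k) (E2 k) (Z1 k) (Z2 k)
     + gQ k \<bullet> d + (\<mu>/2 * (norm (d ** U (Suc k)))^2 + \<mu>/2 * (norm ((W k ** d) ** U (Suc k)))^2 + \<delta>1/2 * n)"
    using expQ[of X H Y \<rho>1 \<rho>2 \<delta>1 \<delta>2 lam2 \<mu> "Om k" "U (Suc k)" "Q k" d "W k" "E1 k" "E2 k" "Z1 k" "Z2 k"]
    unfolding d_def n_def gQ_def by simp
  have n0: "n \<ge> 0" unfolding n_def by simp
  have u2: "(norm (U (Suc k)))^2 \<le> bu^2" using u by (intro power_mono) auto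
  have a1: "(norm (d ** U (Suc k)))^2 \<le> bu^2 * n"
  proof -
    have "(norm (d ** U (Suc k)))^2 \<le> n * (norm (U (Suc k)))^2" unfolding n_def by (rule norm_sq_mm)
    also have "\<dots> \<le> n * bu^2" using u2 n0 by (rule mult_left_mono)
    finally show ?thesis by (simp add: mult.commute)
  qed
  have a2: "(norm ((W k ** d) ** U (Suc k)))^2 \<le> bw * bu^2 * n"
  proof -
    have "(norm ((W k ** d) ** U (Suc k)))^2 \<le> (norm (W k ** d))^2 * (norm (U (Suc k)))^2" by (rule norm_sq_mm)
    also have "\<dots> \<le> ((norm (W k))^2 * n) * bu^2" unfolding n_def by (intro mult_mono norm_sq_mm u2) auto
    also have "\<dots> \<le> (bw * n) * bu^2" by (intro mult_right_mono mult_mono w n0) auto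
    finally show ?thesis by (simp add: algebra_simps)
  qed
  have b1: "\<mu>/2 * (norm (d ** U (Suc k)))^2 \<le> \<mu>/2 * (bu^2 * n)" using a1 pos by (simp add: mult_left_mono)
  have b2: "\<mu>/2 * (norm ((W k ** d) ** U (Suc k)))^2 \<le> \<mu>/2 * (bw * bu^2 * n)" using a2 pos by (simp add: mult_left_mono)
  have eqM: "MQ * n / 2 = \<mu>/2 * (bu^2 * n) + \<mu>/2 * (bw * bu^2 * n) + \<delta>1/2 * n" unfolding MQ_def by (simp add: algebra_simps)
  have cn: "(MQ + 1) * n \<le> c * n" using c1 n0 by (rule mult_right_mono)
  have cn': "MQ * n + n \<le> c * n" using cn by (simp add: algebra_simps)
  have mq: "MQ * n \<ge> 0" using MQ_nn n0 by simp
  show ?thesis unfolding Lag_def using ex gd b1 b2 eqM cn' n0 mq unfolding n_def d_def by linarith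
qed

lemma DW:
  assumes u: "norm (U (Suc k)) \<le> bu" and q: "(norm (Q (Suc k)))^2 \<le> bq"
  shows "LL (Om k) (U (Suc k)) (Q (Suc k)) (W (Suc k)) (E1 k) (E2 k) (Z1 k) (Z2 k) + 1/2 * (norm (W (Suc k) - W k))^2
     \<le> LL (Om k) (U (Suc k)) (Q (Suc k)) (W k) (E1 k) (E2 k) (Z1 k) (Z2 k)"
proof -
  define c where "c = \<mu> * \<eta>W"
  define d where "d = W (Suc k) - W k"
  define n where "n = (norm d)^2"
  have c0: "c > 0" and c1: "c \<ge> MW + 1" unfolding c_def using cpos cW by auto
  have dg: "d = - (1/c) *\<^sub>R gW k" unfolding d_def c_def using Wstep[of k] by simp
  have gd: "gW k \<bullet> d = - c * n"
  proof -
    have "gW k = - c *\<^sub>R d" using dg c0 by simp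
    then show ?thesis unfolding n_def by (simp add: power2_norm_eq_inner)
  qed
  have ex: "Ls' (Om k) (U (Suc k)) (Q (Suc k)) (W (Suc k)) (E1 k) (E2 k) (Z1 k) (Z2 k) = Ls' (Om k) (U (Suc k)) (Q (Suc k)) (W k) (E1 k) (E2 k) (Z1 k) (Z2 k)
     + gW k \<bullet> d + (\<mu>/2 * (norm ((d ** Q (Suc k)) ** U (Suc k)))^2 + \<delta>2/2 * n)"
    using expW[of X H Y \<rho>1 \<rho>2 \<delta>1 \<delta>2 lam2 \<mu> "Om k" "U (Suc k)" "Q (Suc k)" "W k" d "E1 k" "E2 k" "Z1 k" "Z2 k"]
    unfolding d_def n_def gW_def by simp
  have n0: "n \<ge> 0" unfolding n_def by simp
  have u2: "(norm (U (Suc k)))^2 \<le> bu^2" using u by (intro power_mono) auto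
  have a1: "(norm ((d ** Q (Suc k)) ** U (Suc k)))^2 \<le> bq * bu^2 * n"
  proof -
    have "(norm ((d ** Q (Suc k)) ** U (Suc k)))^2 \<le> (norm (d ** Q (Suc k)))^2 * (norm (U (Suc k)))^2" by (rule norm_sq_mm)
    also have "\<dots> \<le> (n * (norm (Q (Suc k)))^2) * bu^2" unfolding n_def by (intro mult_mono norm_sq_mm u2) auto
    also have "\<dots> \<le> (n * bq) * bu^2" by (intro mult_right_mono mult_left_mono q n0) auto
    finally show ?thesis by (simp add: algebra_simps)
  qed
  have b1: "\<mu>/2 * (norm ((d ** Q (Suc k)) ** U (Suc k)))^2 \<le> \<mu>/2 * (bq * bu^2 * n)" using a1 pos by (simp add: mult_left_mono)
  have eqM: "MW * n / 2 = \<mu>/2 * (bq * bu^2 * n) + \<delta>2/2 * n" unfolding MW_def by (simp add: algebra_simps)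
  have cn: "(MW + 1) * n \<le> c * n" using c1 n0 by (rule mult_right_mono)
  have cn': "MW * n + n \<le> c * n" using cn by (simp add: algebra_simps)
  have mq: "MW * n \<ge> 0" using MW_nn n0 by simp
  show ?thesis unfolding Lag_def using ex gd b1 eqM cn' n0 mq unfolding n_def d_def by linarith
qed

lemma DOm:
  "LL (Om (Suc k)) (U (Suc k)) (Q (Suc k)) (W (Suc k)) (E1 k) (E2 k) (Z1 k) (Z2 k) + lam2/2 * (norm (Om (Suc k) - Om k))^2
     \<le> LL (Om k) (U (Suc k)) (Q (Suc k)) (W (Suc k)) (E1 k) (E2 k) (Z1 k) (Z2 k)"
proof -
  define d where "d = Om k - Om (Suc k)"
  have ex: "Ls' (Om (Suc k) + d) (U (Suc k)) (Q (Suc k)) (W (Suc k)) (E1 k) (E2 k) (Z1 k) (Z2 k)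
     = Ls' (Om (Suc k)) (U (Suc k)) (Q (Suc k)) (W (Suc k)) (E1 k) (E2 k) (Z1 k) (Z2 k) + GOm X lam2 (Om (Suc k)) (U (Suc k)) \<bullet> d
       + (1/2 * (norm (d ** X))^2 + lam2/2 * (norm d)^2)"
    by (rule expOm)
  have "norm (Om (Suc k) - Om k) = norm d" unfolding d_def by (rule norm_minus_commute)
  moreover have "Om (Suc k) + d = Om k" unfolding d_def by simp
  ultimately show ?thesis using ex unfolding Lag_def Om_opt by simp
qed

lemma De1:
  "LL (Om (Suc k)) (U (Suc k)) (Q (Suc k)) (W (Suc k)) (E1 (Suc k)) (E2 k) (Z1 k) (Z2 k) + (\<rho>1 + \<mu>)/2 * (norm (E1 (Suc k) - E1 k))^2
     \<le> LL (Om (Suc k)) (U (Suc k)) (Q (Suc k)) (W (Suc k)) (E1 k) (E2 k) (Z1 k) (Z2 k)"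
proof -
  define d where "d = E1 k - E1 (Suc k)"
  have ex: "Ls' (Om (Suc k)) (U (Suc k)) (Q (Suc k)) (W (Suc k)) (E1 (Suc k) + d) (E2 k) (Z1 k) (Z2 k)
     = Ls' (Om (Suc k)) (U (Suc k)) (Q (Suc k)) (W (Suc k)) (E1 (Suc k)) (E2 k) (Z1 k) (Z2 k)
       + (\<rho>1 *\<^sub>R E1 (Suc k) - Z1 k - \<mu> *\<^sub>R (H - Q (Suc k) ** U (Suc k) - E1 (Suc k))) \<bullet> d
       + (\<rho>1 + \<mu>)/2 * (norm d)^2"
    by (rule expe1)
  have "norm (E1 (Suc k) - E1 k) = norm d" unfolding d_def by (rule norm_minus_commute)
  moreover have "E1 (Suc k) + d = E1 k" unfolding d_def by simp
  ultimately show ?thesis using ex unfolding Lag_def e1_opt by simp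
qed

lemma De2:
  "LL (Om (Suc k)) (U (Suc k)) (Q (Suc k)) (W (Suc k)) (E1 (Suc k)) (E2 (Suc k)) (Z1 k) (Z2 k) + (\<rho>2 + \<mu>)/2 * (norm (E2 (Suc k) - E2 k))^2
     \<le> LL (Om (Suc k)) (U (Suc k)) (Q (Suc k)) (W (Suc k)) (E1 (Suc k)) (E2 k) (Z1 k) (Z2 k)"
proof -
  define d where "d = E2 k - E2 (Suc k)"
  have ex: "Ls' (Om (Suc k)) (U (Suc k)) (Q (Suc k)) (W (Suc k)) (E1 (Suc k)) (E2 (Suc k) + d) (Z1 k) (Z2 k)
     = Ls' (Om (Suc k)) (U (Suc k)) (Q (Suc k)) (W (Suc k)) (E1 (Suc k)) (E2 (Suc k)) (Z1 k) (Z2 k)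
       + (\<rho>2 *\<^sub>R E2 (Suc k) - Z2 k - \<mu> *\<^sub>R (Y - (W (Suc k) ** Q (Suc k)) ** U (Suc k) - E2 (Suc k))) \<bullet> d
       + (\<rho>2 + \<mu>)/2 * (norm d)^2"
    by (rule expe2)
  have "norm (E2 (Suc k) - E2 k) = norm d" unfolding d_def by (rule norm_minus_commute)
  moreover have "E2 (Suc k) + d = E2 k" unfolding d_def by simp
  ultimately show ?thesis using ex unfolding Lag_def e2_opt by simp
qed

lemma DZ:
  "LL (Om (Suc k)) (U (Suc k)) (Q (Suc k)) (W (Suc k)) (E1 (Suc k)) (E2 (Suc k)) (Z1 (Suc k)) (Z2 (Suc k))
   = LL (Om (Suc k)) (U (Suc k)) (Q (Suc k)) (W (Suc k)) (E1 (Suc k)) (E2 (Suc k)) (Z1 k) (Z2 k)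
     + (norm (Z1 (Suc k) - Z1 k))^2 / \<mu> + (norm (Z2 (Suc k) - Z2 k))^2 / \<mu>"
proof -
  have r1: "H - Q (Suc k) ** U (Suc k) - E1 (Suc k) = (1/\<mu>) *\<^sub>R (Z1 (Suc k) - Z1 k)"
    using Z1step[of k] pos by simp
  have r2: "Y - (W (Suc k) ** Q (Suc k)) ** U (Suc k) - E2 (Suc k) = (1/\<mu>) *\<^sub>R (Z2 (Suc k) - Z2 k)"
    using Z2step[of k] pos by simp
  have ez: "Ls' (Om (Suc k)) (U (Suc k)) (Q (Suc k)) (W (Suc k)) (E1 (Suc k)) (E2 (Suc k)) (Z1 (Suc k)) (Z2 (Suc k))
    = Ls' (Om (Suc k)) (U (Suc k)) (Q (Suc k)) (W (Suc k)) (E1 (Suc k)) (E2 (Suc k)) (Z1 k) (Z2 k)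
     + (Z1 (Suc k) - Z1 k) \<bullet> (H - Q (Suc k) ** U (Suc k) - E1 (Suc k))
     + (Z2 (Suc k) - Z2 k) \<bullet> (Y - (W (Suc k) ** Q (Suc k)) ** U (Suc k) - E2 (Suc k))"
    by (simp add: Ls_def inner_diff_left)
  show ?thesis unfolding Lag_def ez unfolding r1 r2
    by (simp add: power2_norm_eq_inner divide_inverse mult.commute)
qed

end

lemma norm_diff_sq_le: "(norm (a - b))^2 \<le> 2 * (norm a)^2 + 2 * (norm b)^2"
  for a b :: "'a::real_normed_vector"
proof -
  have "norm (a - b) \<le> norm a + norm b" by (rule norm_triangle_ineq4)
  then have "(norm (a - b))^2 \<le> (norm a + norm b)^2" by (intro power_mono) auto
  also have "\<dots> \<le> 2 * (norm a)^2 + 2 * (norm b)^2"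
  proof -
    have e1: "(norm a + norm b)^2 = (norm a)^2 + 2 * (norm a * norm b) + (norm b)^2"
      by (simp add: power2_eq_square algebra_simps)
    have e2: "(norm a - norm b)^2 = (norm a)^2 - 2 * (norm a * norm b) + (norm b)^2"
      by (simp add: power2_eq_square algebra_simps)
    show ?thesis unfolding e1 using e2 zero_le_power2[of "norm a - norm b"] by linarith
  qed
  finally show ?thesis .
qed

lemma sq_to_zero:
  fixes f :: "nat \<Rightarrow> 'a::real_normed_vector"
  assumes le: "\<And>k. (norm (f k))^2 \<le> C * d k" and d: "d \<longlonglongrightarrow> 0"
  shows "f \<longlonglongrightarrow> 0"
proof -
  have "(\<lambda>k. C * d k) \<longlonglongrightarrow> C * 0" by (intro tendsto_intros d)
  then have c0: "(\<lambda>k. C * d k) \<longlonglongrightarrow> 0" by simp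
  have ev1: "\<forall>\<^sub>F k in sequentially. 0 \<le> (norm (f k))^2" by simp
  have ev2: "\<forall>\<^sub>F k in sequentially. (norm (f k))^2 \<le> C * d k" using le by simp
  have "(\<lambda>k. (norm (f k))^2) \<longlonglongrightarrow> 0"
    by (rule tendsto_sandwich[OF ev1 ev2 tendsto_const c0])
  then have "(\<lambda>k. sqrt ((norm (f k))^2)) \<longlonglongrightarrow> sqrt 0" by (intro tendsto_intros)
  then have "(\<lambda>k. norm (f k)) \<longlonglongrightarrow> 0" by simp
  then show ?thesis by (simp add: tendsto_norm_zero_iff)
qed

lemma le_chain: fixes a b c d :: real shows "a + x \<le> b \<Longrightarrow> 0 \<le> x \<Longrightarrow> b \<le> c \<Longrightarrow> a \<le> c"
  by linarith

lemma chain_arith: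
  fixes s0 s1 s2 s3 s4 s5 s6 x1 x2 x3 x4 x5 x6 :: real
  shows "s1 + x1 \<le> s0 \<Longrightarrow> s2 + x2 \<le> s1 \<Longrightarrow> s3 + x3 \<le> s2 \<Longrightarrow> s4 + x4 \<le> s3 \<Longrightarrow> s5 + x5 \<le> s4
    \<Longrightarrow> s6 + x6 \<le> s5 \<Longrightarrow> s6 + (x1 + x2 + x3 + x4 + x5 + x6) \<le> s0"
proof -
  assume h: "s1 + x1 \<le> s0" "s2 + x2 \<le> s1" "s3 + x3 \<le> s2" "s4 + x4 \<le> s3" "s5 + x5 \<le> s4" "s6 + x6 \<le> s5"
  have "(s1 + x1) + (s2 + x2) + (s3 + x3) + (s4 + x4) + (s5 + x5) + (s6 + x6) \<le> s0 + s1 + s2 + s3 + s4 + s5"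
    by (intro add_mono h)
  then show ?thesis by (simp add: algebra_simps)
qed

context admm_run
begin

abbreviation "LK k \<equiv> LL (Om k) (U k) (Q k) (W k) (E1 k) (E2 k) (Z1 k) (Z2 k)"
abbreviation "zcond k \<equiv> (Z1 k = Z10 \<and> Z2 k = Z20) \<or> (Z1 k = \<rho>1 *\<^sub>R E1 k \<and> Z2 k = \<rho>2 *\<^sub>R E2 k)"

lemma chain:
  assumes L: "LK k \<le> Lam" and z: "zcond k"
  shows "LL (Om (Suc k)) (U (Suc k)) (Q (Suc k)) (W (Suc k)) (E1 (Suc k)) (E2 (Suc k)) (Z1 k) (Z2 k)
      + (1/2 * (norm (U (Suc k) - U k))^2 + 1/2 * (norm (Q (Suc k) - Q k))^2 + 1/2 * (norm (W (Suc k) - W k))^2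
      + lam2/2 * (norm (Om (Suc k) - Om k))^2 + (\<rho>1 + \<mu>)/2 * (norm (E1 (Suc k) - E1 k))^2
      + (\<rho>2 + \<mu>)/2 * (norm (E2 (Suc k) - E2 k))^2) \<le> LK k"
proof -
  have q0: "(norm (Q k))^2 \<le> bq" and w0: "(norm (W k))^2 \<le> bw" using bounds[OF L z] by auto
  note d1 = DU[OF q0 w0]
  have L1: "LL (Om k) (U (Suc k)) (Q k) (W k) (E1 k) (E2 k) (Z1 k) (Z2 k) \<le> Lam"
    by (rule le_chain[OF d1 _ L]) simp
  have u1: "norm (U (Suc k)) \<le> bu" using bounds[OF L1 z] by auto
  note d2 = DQ[OF u1 w0]
  have L2: "LL (Om k) (U (Suc k)) (Q (Suc k)) (W k) (E1 k) (E2 k) (Z1 k) (Z2 k) \<le> Lam"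
    by (rule le_chain[OF d2 _ L1]) simp
  have q1: "(norm (Q (Suc k)))^2 \<le> bq" using bounds[OF L2 z] by auto
  note d3 = DW[OF u1 q1]
  show ?thesis by (rule chain_arith[OF d1 d2 d3 DOm[of k] De1[of k] De2[of k]])
qed

lemma step0:
  "LK (Suc 0) \<le> Lam"
proof -
  have L: "LK 0 \<le> Lam" using Lam_ge unfolding Lam0_def init .
  have z: "zcond 0" using init by simp
  have nn: "0 \<le> 1/2 * (norm (U (Suc 0) - U 0))^2 + 1/2 * (norm (Q (Suc 0) - Q 0))^2 + 1/2 * (norm (W (Suc 0) - W 0))^2
      + lam2/2 * (norm (Om (Suc 0) - Om 0))^2 + (\<rho>1 + \<mu>)/2 * (norm (E1 (Suc 0) - E1 0))^2
      + (\<rho>2 + \<mu>)/2 * (norm (E2 (Suc 0) - E2 0))^2" using pos by simp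
  define S6 where "S6 = LL (Om (Suc 0)) (U (Suc 0)) (Q (Suc 0)) (W (Suc 0)) (E1 (Suc 0)) (E2 (Suc 0)) (Z1 0) (Z2 0)"
  have s6: "S6 \<le> Lam0" using chain[OF L z] nn unfolding S6_def Lam0_def init by linarith
  have lb: "S6 \<ge> lam1 * norm (U (Suc 0)) + \<delta>1/2 * (norm (Q (Suc 0)))^2 + \<delta>2/2 * (norm (W (Suc 0)))^2 + lam2/2 * (norm (Om (Suc 0)))^2
    + \<rho>1/2 * (norm (E1 (Suc 0)))^2 + \<rho>2/2 * (norm (E2 (Suc 0)))^2 - (norm Z10)^2 / (2 * \<mu>) - (norm Z20)^2 / (2 * \<mu>)"
    unfolding S6_def init[symmetric] by (rule Lag_lb) (use pos in auto)
  have "0 \<le> lam1 * norm (U (Suc 0)) + \<delta>1/2 * (norm (Q (Suc 0)))^2 + \<delta>2/2 * (norm (W (Suc 0)))^2 + lam2/2 * (norm (Om (Suc 0)))^2"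
    using pos by simp
  moreover have "(norm Z10)^2 / (2 * \<mu>) + (norm Z20)^2 / (2 * \<mu>) = K0" unfolding K0_def by (simp add: add_divide_distrib)
  ultimately have e12: "\<rho>1/2 * (norm (E1 (Suc 0)))^2 + \<rho>2/2 * (norm (E2 (Suc 0)))^2 \<le> A0"
    using lb s6 unfolding A0_def by linarith
  have e1: "(norm (E1 (Suc 0)))^2 \<le> 2*A0/\<rho>1"
  proof -
    have "\<rho>1/2 * (norm (E1 (Suc 0)))^2 \<le> A0" using e12 pos by (smt (verit) mult_nonneg_nonneg zero_le_power2 half_gt_zero_iff)
    then show ?thesis using pos by (simp add: field_simps)
  qed
  have e2: "(norm (E2 (Suc 0)))^2 \<le> 2*A0/\<rho>2"
  proof -
    have "\<rho>2/2 * (norm (E2 (Suc 0)))^2 \<le> A0" using e12 pos by (smt (verit) mult_nonneg_nonneg zero_le_power2 half_gt_zero_iff)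
    then show ?thesis using pos by (simp add: field_simps)
  qed
  have z1: "(norm (Z1 (Suc 0) - Z1 0))^2 \<le> 2*\<rho>1^2*(2*A0/\<rho>1) + 2*(norm Z10)^2"
  proof -
    have "(norm (Z1 (Suc 0) - Z1 0))^2 \<le> 2 * (norm (Z1 (Suc 0)))^2 + 2 * (norm (Z1 0))^2" by (rule norm_diff_sq_le)
    moreover have "(norm (Z1 (Suc 0)))^2 = \<rho>1^2 * (norm (E1 (Suc 0)))^2"
      unfolding Z1_coupled using pos by (simp add: power_mult_distrib)
    moreover have "\<rho>1^2 * (norm (E1 (Suc 0)))^2 \<le> \<rho>1^2 * (2*A0/\<rho>1)" using mult_left_mono[OF e1, of "\<rho>1^2"] by simp
    ultimately show ?thesis using init by simp
  qed
  have z2: "(norm (Z2 (Suc 0) - Z2 0))^2 \<le> 2*\<rho>2^2*(2*A0/\<rho>2) + 2*(norm Z20)^2"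
  proof -
    have "(norm (Z2 (Suc 0) - Z2 0))^2 \<le> 2 * (norm (Z2 (Suc 0)))^2 + 2 * (norm (Z2 0))^2" by (rule norm_diff_sq_le)
    moreover have "(norm (Z2 (Suc 0)))^2 = \<rho>2^2 * (norm (E2 (Suc 0)))^2"
      unfolding Z2_coupled using pos by (simp add: power_mult_distrib)
    moreover have "\<rho>2^2 * (norm (E2 (Suc 0)))^2 \<le> \<rho>2^2 * (2*A0/\<rho>2)" using mult_left_mono[OF e2, of "\<rho>2^2"] by simp
    ultimately show ?thesis using init by simp
  qed
  have "(norm (Z1 (Suc 0) - Z1 0))^2 / \<mu> + (norm (Z2 (Suc 0) - Z2 0))^2 / \<mu>
     \<le> (2*\<rho>1^2*(2*A0/\<rho>1) + 2*(norm Z10)^2 + 2*\<rho>2^2*(2*A0/\<rho>2) + 2*(norm Z20)^2)/\<mu>"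
    using z1 z2 pos by (simp add: add_divide_distrib[symmetric] divide_right_mono)
  then show ?thesis using DZ[of 0] s6 unfolding S6_def Lam_def by linarith
qed

lemma descent:
  assumes L: "LK (Suc k) \<le> Lam"
  shows "LK (Suc (Suc k)) + (1/2 * (norm (U (Suc (Suc k)) - U (Suc k)))^2 + 1/2 * (norm (Q (Suc (Suc k)) - Q (Suc k)))^2
      + 1/2 * (norm (W (Suc (Suc k)) - W (Suc k)))^2
      + lam2/2 * (norm (Om (Suc (Suc k)) - Om (Suc k)))^2 + \<rho>1/2 * (norm (E1 (Suc (Suc k)) - E1 (Suc k)))^2
      + \<rho>2/2 * (norm (E2 (Suc (Suc k)) - E2 (Suc k)))^2) \<le> LK (Suc k)"
proof -
  let ?j = "Suc k"
  have z: "zcond ?j" using Z1_coupled[of k] Z2_coupled[of k] by simp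
  note c = chain[OF L z]
  have dz1: "Z1 (Suc ?j) - Z1 ?j = \<rho>1 *\<^sub>R (E1 (Suc ?j) - E1 ?j)"
    using Z1_coupled[of k] Z1_coupled[of ?j] by (simp add: algebra_simps)
  have dz2: "Z2 (Suc ?j) - Z2 ?j = \<rho>2 *\<^sub>R (E2 (Suc ?j) - E2 ?j)"
    using Z2_coupled[of k] Z2_coupled[of ?j] by (simp add: algebra_simps)
  define n1 where "n1 = (norm (E1 (Suc ?j) - E1 ?j))^2"
  define n2 where "n2 = (norm (E2 (Suc ?j) - E2 ?j))^2"
  have f1: "(norm (Z1 (Suc ?j) - Z1 ?j))^2 / \<mu> \<le> \<mu>/2 * n1"
  proof -
    have "(norm (Z1 (Suc ?j) - Z1 ?j))^2 = \<rho>1^2 * n1" unfolding dz1 n1_def using pos by (simp add: power_mult_distrib)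
    moreover have "\<rho>1^2 * n1 \<le> \<mu>^2/2 * n1" using rho_le(3) unfolding n1_def by (intro mult_right_mono) auto
    moreover have "\<mu>^2/2 * n1 / \<mu> = \<mu>/2 * n1" using pos by (simp add: power2_eq_square)
    ultimately show ?thesis using pos by (metis divide_right_mono less_imp_le)
  qed
  have f2: "(norm (Z2 (Suc ?j) - Z2 ?j))^2 / \<mu> \<le> \<mu>/2 * n2"
  proof -
    have "(norm (Z2 (Suc ?j) - Z2 ?j))^2 = \<rho>2^2 * n2" unfolding dz2 n2_def using pos by (simp add: power_mult_distrib)
    moreover have "\<rho>2^2 * n2 \<le> \<mu>^2/2 * n2" using rho_le(4) unfolding n2_def by (intro mult_right_mono) auto
    moreover have "\<mu>^2/2 * n2 / \<mu> = \<mu>/2 * n2" using pos by (simp add: power2_eq_square)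
    ultimately show ?thesis using pos by (metis divide_right_mono less_imp_le)
  qed
  have g1: "(\<rho>1 + \<mu>)/2 * n1 = \<rho>1/2 * n1 + \<mu>/2 * n1" by (simp add: algebra_simps)
  have g2: "(\<rho>2 + \<mu>)/2 * n2 = \<rho>2/2 * n2 + \<mu>/2 * n2" by (simp add: algebra_simps)
  show ?thesis using c DZ[of ?j] f1 f2 g1 g2 unfolding n1_def n2_def by linarith
qed

lemma LK_bound: "LK k \<le> Lam"
proof (induction k)
  case 0
  show ?case using Lam_ge unfolding Lam0_def init .
next
  case (Suc k)
  show ?case
  proof (cases k)
    case 0
    then show ?thesis using step0 by simp
  next
    case (Suc j)
    have nn: "0 \<le> 1/2 * (norm (U (Suc (Suc j)) - U (Suc j)))^2 + 1/2 * (norm (Q (Suc (Suc j)) - Q (Suc j)))^2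
      + 1/2 * (norm (W (Suc (Suc j)) - W (Suc j)))^2
      + lam2/2 * (norm (Om (Suc (Suc j)) - Om (Suc j)))^2 + \<rho>1/2 * (norm (E1 (Suc (Suc j)) - E1 (Suc j)))^2
      + \<rho>2/2 * (norm (E2 (Suc (Suc j)) - E2 (Suc j)))^2" using pos by simp
    show ?thesis using descent[of j] Suc.IH nn unfolding Suc by linarith
  qed
qed

end

lemma sum6_parts:
  fixes a b x1 x2 x3 x4 x5 x6 :: real
  assumes "a + (x1 + x2 + x3 + x4 + x5 + x6) \<le> b" "0 \<le> x1" "0 \<le> x2" "0 \<le> x3" "0 \<le> x4" "0 \<le> x5" "0 \<le> x6"
  shows "x1 \<le> b - a" "x2 \<le> b - a" "x3 \<le> b - a" "x4 \<le> b - a" "x5 \<le> b - a" "x6 \<le> b - a"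
proof -
  have "0 \<le> x2 + x3 + x4 + x5 + x6" "0 \<le> x1 + x3 + x4 + x5 + x6" "0 \<le> x1 + x2 + x4 + x5 + x6"
    "0 \<le> x1 + x2 + x3 + x5 + x6" "0 \<le> x1 + x2 + x3 + x4 + x6" "0 \<le> x1 + x2 + x3 + x4 + x5"
    by (intro add_nonneg_nonneg assms)+
  then show "x1 \<le> b - a" "x2 \<le> b - a" "x3 \<le> b - a" "x4 \<le> b - a" "x5 \<le> b - a" "x6 \<le> b - a"
    using assms(1) by linarith+
qed

lemma next_lim:
  fixes f :: "nat \<Rightarrow> 'a::real_normed_vector"
  assumes "(\<lambda>j. f (s j)) \<longlonglongrightarrow> a" "(\<lambda>k. f (Suc k) - f k) \<longlonglongrightarrow> 0" "strict_mono s"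
  shows "(\<lambda>j. f (Suc (s j))) \<longlonglongrightarrow> a"
proof -
  have "((\<lambda>k. f (Suc k) - f k) \<circ> s) \<longlonglongrightarrow> 0" by (rule LIMSEQ_subseq_LIMSEQ[OF assms(2,3)])
  then have "(\<lambda>j. f (s j) + (f (Suc (s j)) - f (s j))) \<longlonglongrightarrow> a + 0"
    by (intro tendsto_add assms(1)) (simp add: o_def)
  then show ?thesis by simp
qed

context admm_run
begin

lemma LK_nn: "LK (Suc k) \<ge> 0"
  by (rule coupled_nn) (simp_all add: Z1_coupled Z2_coupled)

definition "dd k = LK (Suc k) - LK (Suc (Suc k))"

lemma dd_parts:
  "1/2 * (norm (U (Suc (Suc k)) - U (Suc k)))^2 \<le> dd k"
  "1/2 * (norm (Q (Suc (Suc k)) - Q (Suc k)))^2 \<le> dd k"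
  "1/2 * (norm (W (Suc (Suc k)) - W (Suc k)))^2 \<le> dd k"
  "lam2/2 * (norm (Om (Suc (Suc k)) - Om (Suc k)))^2 \<le> dd k"
  "\<rho>1/2 * (norm (E1 (Suc (Suc k)) - E1 (Suc k)))^2 \<le> dd k"
  "\<rho>2/2 * (norm (E2 (Suc (Suc k)) - E2 (Suc k)))^2 \<le> dd k"
  unfolding dd_def using sum6_parts[OF descent[OF LK_bound[of "Suc k"]]] pos by auto

lemma dd_lim: "dd \<longlonglongrightarrow> 0"
proof -
  have dec: "decseq (\<lambda>k. LK (Suc k))"
  proof (rule decseq_SucI)
    fix k show "LK (Suc (Suc k)) \<le> LK (Suc k)" using dd_parts(1)[of k] zero_le_power2[of "norm (U (Suc (Suc k)) - U (Suc k))"]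
      unfolding dd_def by linarith
  qed
  obtain L where L: "(\<lambda>k. LK (Suc k)) \<longlonglongrightarrow> L" using decseq_convergent[OF dec, of 0] LK_nn by blast
  have "(\<lambda>k. LK (Suc (Suc k))) \<longlonglongrightarrow> L" using LIMSEQ_Suc[OF L] by simp
  then have "(\<lambda>k. LK (Suc k) - LK (Suc (Suc k))) \<longlonglongrightarrow> L - L" by (intro tendsto_diff L)
  then show ?thesis unfolding dd_def by simp
qed

lemma half_bound: fixes c n d :: real assumes "c > 0" "c/2 * n \<le> d" shows "n \<le> (2/c) * d"
proof -
  have "(2/c) * (c/2 * n) \<le> (2/c) * d" using assms by (intro mult_left_mono) auto
  moreover have "(2/c) * (c/2 * n) = n" using assms(1) by simp
  ultimately show ?thesis by simp
qed

lemma diffs_to_zero: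
  "(\<lambda>k. U (Suc k) - U k) \<longlonglongrightarrow> 0" "(\<lambda>k. Q (Suc k) - Q k) \<longlonglongrightarrow> 0"
  "(\<lambda>k. W (Suc k) - W k) \<longlonglongrightarrow> 0" "(\<lambda>k. Om (Suc k) - Om k) \<longlonglongrightarrow> 0"
  "(\<lambda>k. E1 (Suc k) - E1 k) \<longlonglongrightarrow> 0" "(\<lambda>k. E2 (Suc k) - E2 k) \<longlonglongrightarrow> 0"
  "(\<lambda>k. Z1 (Suc k) - Z1 k) \<longlonglongrightarrow> 0" "(\<lambda>k. Z2 (Suc k) - Z2 k) \<longlonglongrightarrow> 0"
proof -
  have one: "(1::real) > 0" by simp
  have hU: "\<And>k. (norm (U (Suc (Suc k)) - U (Suc k)))^2 \<le> (2/1) * dd k"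
    using half_bound[OF one dd_parts(1)] .
  show "(\<lambda>k. U (Suc k) - U k) \<longlonglongrightarrow> 0" by (rule LIMSEQ_imp_Suc, rule sq_to_zero[OF hU dd_lim])
  have hQ: "\<And>k. (norm (Q (Suc (Suc k)) - Q (Suc k)))^2 \<le> (2/1) * dd k"
    using half_bound[OF one dd_parts(2)] .
  show "(\<lambda>k. Q (Suc k) - Q k) \<longlonglongrightarrow> 0" by (rule LIMSEQ_imp_Suc, rule sq_to_zero[OF hQ dd_lim])
  have hW: "\<And>k. (norm (W (Suc (Suc k)) - W (Suc k)))^2 \<le> (2/1) * dd k"
    using half_bound[OF one dd_parts(3)] .
  show "(\<lambda>k. W (Suc k) - W k) \<longlonglongrightarrow> 0" by (rule LIMSEQ_imp_Suc, rule sq_to_zero[OF hW dd_lim])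
  have hOm: "\<And>k. (norm (Om (Suc (Suc k)) - Om (Suc k)))^2 \<le> (2/lam2) * dd k"
    using half_bound[OF pos(2) dd_parts(4)] .
  show "(\<lambda>k. Om (Suc k) - Om k) \<longlonglongrightarrow> 0" by (rule LIMSEQ_imp_Suc, rule sq_to_zero[OF hOm dd_lim])
  have "\<And>k. (norm (E1 (Suc (Suc k)) - E1 (Suc k)))^2 \<le> (2/\<rho>1) * dd k"
    using half_bound[OF pos(3) dd_parts(5)] .
  then have "(\<lambda>k. E1 (Suc (Suc k)) - E1 (Suc k)) \<longlonglongrightarrow> 0" by (rule sq_to_zero[OF _ dd_lim])
  note e1 = this
  then show "(\<lambda>k. E1 (Suc k) - E1 k) \<longlonglongrightarrow> 0" by (rule LIMSEQ_imp_Suc)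
  have "\<And>k. (norm (E2 (Suc (Suc k)) - E2 (Suc k)))^2 \<le> (2/\<rho>2) * dd k"
    using half_bound[OF pos(4) dd_parts(6)] .
  then have "(\<lambda>k. E2 (Suc (Suc k)) - E2 (Suc k)) \<longlonglongrightarrow> 0" by (rule sq_to_zero[OF _ dd_lim])
  note e2 = this
  then show "(\<lambda>k. E2 (Suc k) - E2 k) \<longlonglongrightarrow> 0" by (rule LIMSEQ_imp_Suc)
  have "(\<lambda>k. \<rho>1 *\<^sub>R (E1 (Suc (Suc k)) - E1 (Suc k))) \<longlonglongrightarrow> \<rho>1 *\<^sub>R 0"
    by (intro tendsto_scaleR tendsto_const e1)
  moreover have "\<And>k. \<rho>1 *\<^sub>R (E1 (Suc (Suc k)) - E1 (Suc k)) = Z1 (Suc (Suc k)) - Z1 (Suc k)"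
    by (simp add: Z1_coupled scaleR_diff_right)
  ultimately have "(\<lambda>k. Z1 (Suc (Suc k)) - Z1 (Suc k)) \<longlonglongrightarrow> 0" by simp
  then show "(\<lambda>k. Z1 (Suc k) - Z1 k) \<longlonglongrightarrow> 0" by (rule LIMSEQ_imp_Suc)
  have "(\<lambda>k. \<rho>2 *\<^sub>R (E2 (Suc (Suc k)) - E2 (Suc k))) \<longlonglongrightarrow> \<rho>2 *\<^sub>R 0"
    by (intro tendsto_scaleR tendsto_const e2)
  moreover have "\<And>k. \<rho>2 *\<^sub>R (E2 (Suc (Suc k)) - E2 (Suc k)) = Z2 (Suc (Suc k)) - Z2 (Suc k)"
    by (simp add: Z2_coupled scaleR_diff_right)
  ultimately have "(\<lambda>k. Z2 (Suc (Suc k)) - Z2 (Suc k)) \<longlonglongrightarrow> 0" by simp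
  then show "(\<lambda>k. Z2 (Suc k) - Z2 k) \<longlonglongrightarrow> 0" by (rule LIMSEQ_imp_Suc)
qed

end

lemma lim_eq_zero:
  fixes f :: "nat \<Rightarrow> 'a::real_normed_vector"
  assumes "f \<longlonglongrightarrow> a" "\<And>j. f j = 0" shows "a = 0"
proof -
  have "f = (\<lambda>j. 0)" using assms(2) by (simp add: fun_eq_iff)
  then have "(\<lambda>j. 0) \<longlonglongrightarrow> a" using assms(1) by simp
  then show ?thesis by (metis LIMSEQ_const_iff)
qed

lemma norm_le_sq1: "(x::real) \<ge> 0 \<Longrightarrow> x^2 \<le> S \<Longrightarrow> x \<le> S + 1"
proof (cases "x \<le> 1")
  case True
  assume "x^2 \<le> S" then have "S \<ge> 0" by (meson order_trans zero_le_power2)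
  then show ?thesis using True by simp
next
  case False
  assume "x^2 \<le> S"
  moreover have "x \<le> x^2" using False by (simp add: power2_eq_square)
  ultimately show ?thesis by simp
qed

context admm_run
begin

abbreviation "TT k \<equiv> (Om k, U k, Q k, W k, E1 k, E2 k, Z1 k, Z2 k)"
abbreviation "SS \<equiv> (statset X H Y lam1 \<rho>1 \<rho>2 \<delta>1 \<delta>2 lam2 \<mu> RR ::
  ((real^'m^'r) \<times> (real^'n^'r) \<times> (real^'r^'s) \<times> (real^'s^'c) \<times> (real^'n^'s) \<times>
    (real^'n^'c) \<times> (real^'n^'s) \<times> (real^'n^'c)) set)"

lemma TT_bound: "norm (TT (Suc k)) \<le> Sq + 1"
  by (rule norm_le_sq1[OF norm_ge_zero coupled_norm[OF LK_bound Z1_coupled Z2_coupled]])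

lemma limit_in_S:
  assumes smr: "strict_mono r" and conv: "((\<lambda>k. TT (Suc k)) \<circ> r) \<longlonglongrightarrow> l"
  shows "l \<in> SS"
proof -
  define lO where "lO = fst l"
  define lU where "lU = fst (snd l)"
  define lQ where "lQ = fst (snd (snd l))"
  define lW where "lW = fst (snd (snd (snd l)))"
  define le1 where "le1 = fst (snd (snd (snd (snd l))))"
  define le2 where "le2 = fst (snd (snd (snd (snd (snd l)))))"
  define lZ1 where "lZ1 = fst (snd (snd (snd (snd (snd (snd l))))))"
  define lZ2 where "lZ2 = snd (snd (snd (snd (snd (snd (snd l))))))"
  have l: "l = (lO, lU, lQ, lW, le1, le2, lZ1, lZ2)"
    unfolding lO_def lU_def lQ_def lW_def le1_def le2_def lZ1_def lZ2_def by simp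
  define s where "s j = Suc (r j)" for j
  have sms: "strict_mono s" using smr by (simp add: strict_mono_def s_def)
  have cT: "(\<lambda>j. TT (s j)) \<longlonglongrightarrow> (lO, lU, lQ, lW, le1, le2, lZ1, lZ2)"
    using conv unfolding l by (simp add: o_def s_def)
  have cO: "(\<lambda>j. Om (s j)) \<longlonglongrightarrow> lO" using tendsto_fst[OF cT] by simp
  have cU: "(\<lambda>j. U (s j)) \<longlonglongrightarrow> lU" using tendsto_fst[OF tendsto_snd[OF cT]] by simp
  have cQ: "(\<lambda>j. Q (s j)) \<longlonglongrightarrow> lQ" using tendsto_fst[OF tendsto_snd[OF tendsto_snd[OF cT]]] by simp
  have cW: "(\<lambda>j. W (s j)) \<longlonglongrightarrow> lW"
    using tendsto_fst[OF tendsto_snd[OF tendsto_snd[OF tendsto_snd[OF cT]]]] by simp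
  have ce1: "(\<lambda>j. E1 (s j)) \<longlonglongrightarrow> le1"
    using tendsto_fst[OF tendsto_snd[OF tendsto_snd[OF tendsto_snd[OF tendsto_snd[OF cT]]]]] by simp
  have ce2: "(\<lambda>j. E2 (s j)) \<longlonglongrightarrow> le2"
    using tendsto_fst[OF tendsto_snd[OF tendsto_snd[OF tendsto_snd[OF tendsto_snd[OF tendsto_snd[OF cT]]]]]] by simp
  have cZ1: "(\<lambda>j. Z1 (s j)) \<longlonglongrightarrow> lZ1"
    using tendsto_fst[OF tendsto_snd[OF tendsto_snd[OF tendsto_snd[OF tendsto_snd[OF tendsto_snd[OF tendsto_snd[OF cT]]]]]]] by simp
  have cZ2: "(\<lambda>j. Z2 (s j)) \<longlonglongrightarrow> lZ2"
    using tendsto_snd[OF tendsto_snd[OF tendsto_snd[OF tendsto_snd[OF tendsto_snd[OF tendsto_snd[OF tendsto_snd[OF cT]]]]]]] by simp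
  have nO: "(\<lambda>j. Om (Suc (s j))) \<longlonglongrightarrow> lO" by (rule next_lim[OF cO diffs_to_zero(4) sms])
  have nU: "(\<lambda>j. U (Suc (s j))) \<longlonglongrightarrow> lU" by (rule next_lim[OF cU diffs_to_zero(1) sms])
  have nQ: "(\<lambda>j. Q (Suc (s j))) \<longlonglongrightarrow> lQ" by (rule next_lim[OF cQ diffs_to_zero(2) sms])
  have nW: "(\<lambda>j. W (Suc (s j))) \<longlonglongrightarrow> lW" by (rule next_lim[OF cW diffs_to_zero(3) sms])
  have ne1: "(\<lambda>j. E1 (Suc (s j))) \<longlonglongrightarrow> le1" by (rule next_lim[OF ce1 diffs_to_zero(5) sms])
  have ne2: "(\<lambda>j. E2 (Suc (s j))) \<longlonglongrightarrow> le2" by (rule next_lim[OF ce2 diffs_to_zero(6) sms])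
  have nZ1: "(\<lambda>j. Z1 (Suc (s j))) \<longlonglongrightarrow> lZ1" by (rule next_lim[OF cZ1 diffs_to_zero(7) sms])
  have nZ2: "(\<lambda>j. Z2 (Suc (s j))) \<longlonglongrightarrow> lZ2" by (rule next_lim[OF cZ2 diffs_to_zero(8) sms])

  have gOm0: "GOm X lam2 lO lU = 0"
  proof (rule lim_eq_zero)
    show "(\<lambda>j. GOm X lam2 (Om (Suc (s j))) (U (Suc (s j)))) \<longlonglongrightarrow> GOm X lam2 lO lU"
      unfolding GOm_def by (intro tendsto_intros nO nU)
    show "\<And>j. GOm X lam2 (Om (Suc (s j))) (U (Suc (s j))) = 0" by (rule Om_opt)
  qed
  have ge10: "\<rho>1 *\<^sub>R le1 - lZ1 - \<mu> *\<^sub>R (H - lQ ** lU - le1) = 0"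
  proof (rule lim_eq_zero)
    show "(\<lambda>j. \<rho>1 *\<^sub>R E1 (Suc (s j)) - Z1 (s j) - \<mu> *\<^sub>R (H - Q (Suc (s j)) ** U (Suc (s j)) - E1 (Suc (s j))))
      \<longlonglongrightarrow> \<rho>1 *\<^sub>R le1 - lZ1 - \<mu> *\<^sub>R (H - lQ ** lU - le1)"
      by (intro tendsto_intros ne1 cZ1 nQ nU)
    show "\<And>j. \<rho>1 *\<^sub>R E1 (Suc (s j)) - Z1 (s j) - \<mu> *\<^sub>R (H - Q (Suc (s j)) ** U (Suc (s j)) - E1 (Suc (s j))) = 0"
      by (rule e1_opt)
  qed
  have ge20: "\<rho>2 *\<^sub>R le2 - lZ2 - \<mu> *\<^sub>R (Y - (lW ** lQ) ** lU - le2) = 0"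
  proof (rule lim_eq_zero)
    show "(\<lambda>j. \<rho>2 *\<^sub>R E2 (Suc (s j)) - Z2 (s j) - \<mu> *\<^sub>R (Y - (W (Suc (s j)) ** Q (Suc (s j))) ** U (Suc (s j)) - E2 (Suc (s j))))
      \<longlonglongrightarrow> \<rho>2 *\<^sub>R le2 - lZ2 - \<mu> *\<^sub>R (Y - (lW ** lQ) ** lU - le2)"
      by (intro tendsto_intros ne2 cZ2 nW nQ nU)
    show "\<And>j. \<rho>2 *\<^sub>R E2 (Suc (s j)) - Z2 (s j) - \<mu> *\<^sub>R (Y - (W (Suc (s j)) ** Q (Suc (s j))) ** U (Suc (s j)) - E2 (Suc (s j))) = 0"
      by (rule e2_opt)
  qed
  have r10: "H - lQ ** lU - le1 = 0"
  proof -
    have a: "(\<lambda>j. H - Q (Suc (s j)) ** U (Suc (s j)) - E1 (Suc (s j))) \<longlonglongrightarrow> H - lQ ** lU - le1"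
      by (intro tendsto_intros nQ nU ne1)
    have "(\<lambda>j. (1/\<mu>) *\<^sub>R (Z1 (Suc (s j)) - Z1 (s j))) \<longlonglongrightarrow> (1/\<mu>) *\<^sub>R (lZ1 - lZ1)"
      by (intro tendsto_intros nZ1 cZ1)
    moreover have "\<And>j. (1/\<mu>) *\<^sub>R (Z1 (Suc (s j)) - Z1 (s j)) = H - Q (Suc (s j)) ** U (Suc (s j)) - E1 (Suc (s j))"
      using Z1step pos by simp
    ultimately have "(\<lambda>j. H - Q (Suc (s j)) ** U (Suc (s j)) - E1 (Suc (s j))) \<longlonglongrightarrow> 0" by simp
    then show ?thesis using a LIMSEQ_unique by blast
  qed
  have r20: "Y - (lW ** lQ) ** lU - le2 = 0"
  proof -
    have a: "(\<lambda>j. Y - (W (Suc (s j)) ** Q (Suc (s j))) ** U (Suc (s j)) - E2 (Suc (s j))) \<longlonglongrightarrow> Y - (lW ** lQ) ** lU - le2"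
      by (intro tendsto_intros nW nQ nU ne2)
    have "(\<lambda>j. (1/\<mu>) *\<^sub>R (Z2 (Suc (s j)) - Z2 (s j))) \<longlonglongrightarrow> (1/\<mu>) *\<^sub>R (lZ2 - lZ2)"
      by (intro tendsto_intros nZ2 cZ2)
    moreover have "\<And>j. (1/\<mu>) *\<^sub>R (Z2 (Suc (s j)) - Z2 (s j)) = Y - (W (Suc (s j)) ** Q (Suc (s j))) ** U (Suc (s j)) - E2 (Suc (s j))"
      using Z2step pos by simp
    ultimately have "(\<lambda>j. Y - (W (Suc (s j)) ** Q (Suc (s j))) ** U (Suc (s j)) - E2 (Suc (s j))) \<longlonglongrightarrow> 0" by simp
    then show ?thesis using a LIMSEQ_unique by blast
  qed
  have gQ0: "GQ H Y \<delta>1 \<mu> lU lQ lW le1 le2 lZ1 lZ2 = 0"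
  proof -
    have a: "(\<lambda>j. gQ (s j)) \<longlonglongrightarrow> GQ H Y \<delta>1 \<mu> lU lQ lW le1 le2 lZ1 lZ2"
      unfolding gQ_def GQ_def by (intro tendsto_intros nU cQ cW ce1 ce2 cZ1 cZ2)
    have "(\<lambda>j. (\<mu> * \<eta>Q) *\<^sub>R (Q (s j) - Q (Suc (s j)))) \<longlonglongrightarrow> (\<mu> * \<eta>Q) *\<^sub>R (lQ - lQ)"
      by (intro tendsto_intros nQ cQ)
    moreover have "(\<mu> * \<eta>Q) *\<^sub>R (Q (s j) - Q (Suc (s j))) = gQ (s j)" for j
    proof -
      have "Q (s j) - Q (Suc (s j)) = (1 / (\<mu> * \<eta>Q)) *\<^sub>R gQ (s j)" using Qstep[of "s j"] by simp
      moreover have "\<mu> \<noteq> 0" "\<eta>Q \<noteq> 0" using cpos(2) pos(7) by auto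
      ultimately show ?thesis by simp
    qed
    ultimately have "(\<lambda>j. gQ (s j)) \<longlonglongrightarrow> 0" by simp
    then show ?thesis using a LIMSEQ_unique by blast
  qed
  have gW0: "GW Y \<delta>2 \<mu> lU lQ lW le2 lZ2 = 0"
  proof -
    have a: "(\<lambda>j. gW (s j)) \<longlonglongrightarrow> GW Y \<delta>2 \<mu> lU lQ lW le2 lZ2"
      unfolding gW_def GW_def by (intro tendsto_intros nU nQ cW ce2 cZ2)
    have "(\<lambda>j. (\<mu> * \<eta>W) *\<^sub>R (W (s j) - W (Suc (s j)))) \<longlonglongrightarrow> (\<mu> * \<eta>W) *\<^sub>R (lW - lW)"
      by (intro tendsto_intros nW cW)
    moreover have "(\<mu> * \<eta>W) *\<^sub>R (W (s j) - W (Suc (s j))) = gW (s j)" for j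
    proof -
      have "W (s j) - W (Suc (s j)) = (1 / (\<mu> * \<eta>W)) *\<^sub>R gW (s j)" using Wstep[of "s j"] by simp
      moreover have "\<mu> \<noteq> 0" "\<eta>W \<noteq> 0" using cpos(3) pos(7) by auto
      ultimately show ?thesis by simp
    qed
    ultimately have "(\<lambda>j. gW (s j)) \<longlonglongrightarrow> 0" by simp
    then show ?thesis using a LIMSEQ_unique by blast
  qed
  define gs where "gs = GU X H Y \<mu> lO lU lQ lW le1 le2 lZ1 lZ2"
  have cg: "(\<lambda>j. gU (s j)) \<longlonglongrightarrow> gs"
    unfolding gU_def gs_def GU_def by (intro tendsto_intros cO cU cQ cW ce1 ce2 cZ1 cZ2)
  have pmin: "lam1 * l1norm lU \<le> lam1 * l1norm V + gs \<bullet> (V - lU) + (\<mu> * \<eta>U)/2 * (norm (V - lU))^2" for V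
  proof -
    have ineq: "lam1 * l1norm (U (Suc (s j))) + gU (s j) \<bullet> (U (Suc (s j)) - U (s j)) + (\<mu> * \<eta>U)/2 * (norm (U (Suc (s j)) - U (s j)))^2
      \<le> lam1 * l1norm V + gU (s j) \<bullet> (V - U (s j)) + (\<mu> * \<eta>U)/2 * (norm (V - U (s j)))^2" for j
      using prox_ineq[OF cpos(1) l1_nn, of "U (s j)" "gU (s j)" V] unfolding Ustep[of "s j", symmetric] .
    have "lam1 * l1norm lU + gs \<bullet> (lU - lU) + (\<mu> * \<eta>U)/2 * (norm (lU - lU))^2
      \<le> lam1 * l1norm V + gs \<bullet> (V - lU) + (\<mu> * \<eta>U)/2 * (norm (V - lU))^2"
    proof (rule tendsto_le[OF sequentially_bot _ _ always_eventually[OF allI[OF ineq]]])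
      show "(\<lambda>j. lam1 * l1norm V + gU (s j) \<bullet> (V - U (s j)) + (\<mu> * \<eta>U)/2 * (norm (V - U (s j)))^2)
        \<longlonglongrightarrow> lam1 * l1norm V + gs \<bullet> (V - lU) + (\<mu> * \<eta>U)/2 * (norm (V - lU))^2"
        by (intro tendsto_intros cg cU)
      show "(\<lambda>j. lam1 * l1norm (U (Suc (s j))) + gU (s j) \<bullet> (U (Suc (s j)) - U (s j)) + (\<mu> * \<eta>U)/2 * (norm (U (Suc (s j)) - U (s j)))^2)
        \<longlonglongrightarrow> lam1 * l1norm lU + gs \<bullet> (lU - lU) + (\<mu> * \<eta>U)/2 * (norm (lU - lU))^2"
        by (intro tendsto_intros tendsto_l1norm cg cU nU)
    qed
    then show ?thesis by simp
  qed
  have sub: "l1norm lU + (- (1/lam1) *\<^sub>R gs) \<bullet> (y - lU) \<le> l1norm y" for y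
    by (rule subgrad_from_prox[OF pos(1) _ pmin]) (use cpos(1) in simp)
  have nl: "norm l < RR"
  proof -
    have "(\<lambda>j. norm (TT (s j))) \<longlonglongrightarrow> norm l" using tendsto_norm[OF cT] unfolding l .
    moreover have "\<And>j. norm (TT (s j)) \<le> Sq + 1" unfolding s_def by (rule TT_bound)
    ultimately have "norm l \<le> Sq + 1" by (intro tendsto_upperbound) auto
    then show ?thesis unfolding RR_def by simp
  qed
  have gT: "grad (LsT X H Y \<rho>1 \<rho>2 \<delta>1 \<delta>2 lam2 \<mu>) l = (0, gs, 0, 0, 0, 0, 0, 0)"
    unfolding grad_eqI[OF LsT_deriv] l GT_def gs_def
    using gOm0 gQ0 gW0 ge10 ge20 r10 r20 by simp
  define g where "g = ((0::real^'m^'r), - (1/lam1) *\<^sub>R gs, (0::real^'r^'s), (0::real^'s^'c),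
     (0::real^'n^'s), (0::real^'n^'c), (0::real^'n^'s), (0::real^'n^'c))"
  have gsub: "g \<in> subdiff (\<lambda>th'. l1norm (fst (snd th'))) l"
    unfolding subdiff_def g_def l using sub by (simp add: inner_prod_def)
  have "- grad (LsT X H Y \<rho>1 \<rho>2 \<delta>1 \<delta>2 lam2 \<mu>) l = lam1 *\<^sub>R g"
    unfolding gT g_def using pos(1) by (simp add: zero_prod_def)
  then have m: "- grad (LsT X H Y \<rho>1 \<rho>2 \<delta>1 \<delta>2 lam2 \<mu>) l \<in> (\<lambda>g. lam1 *\<^sub>R g) ` subdiff (\<lambda>th'. l1norm (fst (snd th'))) l"
    using gsub by blast
  have f: "H = lQ ** lU + le1" "Y = (lW ** lQ) ** lU + le2"
    using r10 r20 by (simp_all add: algebra_simps)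
  show ?thesis unfolding statset_def using nl m f unfolding l by simp
qed

lemma final: "SS \<noteq> {} \<and> (\<lambda>k. infdist (TT k) SS) \<longlonglongrightarrow> 0"
proof -
  have b: "\<And>k. norm (TT (Suc k)) \<le> Sq + 1" by (rule TT_bound)
  have lim: "\<And>r l. strict_mono r \<Longrightarrow> ((\<lambda>k. TT (Suc k)) \<circ> r) \<longlonglongrightarrow> l \<Longrightarrow> l \<in> SS"
    by (rule limit_in_S)
  have r1: "SS \<noteq> {}"
    by (rule infdist_tendsto_zero(1)[of "\<lambda>k. TT (Suc k)" "Sq + 1" SS]) (use b lim in auto)
  have r2: "(\<lambda>k. infdist (TT (Suc k)) SS) \<longlonglongrightarrow> 0"
    by (rule infdist_tendsto_zero(2)[of "\<lambda>k. TT (Suc k)" "Sq + 1" SS]) (use b lim in auto)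
  show ?thesis using r1 LIMSEQ_imp_Suc[OF r2] by simp
qed

lemma statset_mono: "R \<le> R' \<Longrightarrow> statset X H Y lam1 \<rho>1 \<rho>2 \<delta>1 \<delta>2 lam2 \<mu> R \<subseteq> statset X H Y lam1 \<rho>1 \<rho>2 \<delta>1 \<delta>2 lam2 \<mu> R'"
  unfolding statset_def by auto

lemma final2:
  assumes c: "c \<ge> 0"
  shows "(\<lambda>k. infdist (TT k) (statset X H Y lam1 \<rho>1 \<rho>2 \<delta>1 \<delta>2 lam2 \<mu> (RR + c))) \<longlonglongrightarrow> 0"
proof -
  have b: "\<And>k. norm (TT (Suc k)) \<le> Sq + 1" by (rule TT_bound)
  have lim: "\<And>r l. strict_mono r \<Longrightarrow> ((\<lambda>k. TT (Suc k)) \<circ> r) \<longlonglongrightarrow> l \<Longrightarrow> l \<in> statset X H Y lam1 \<rho>1 \<rho>2 \<delta>1 \<delta>2 lam2 \<mu> (RR + c)"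
    using limit_in_S statset_mono[of RR "RR + c"] c by fastforce
  have r2: "(\<lambda>k. infdist (TT (Suc k)) (statset X H Y lam1 \<rho>1 \<rho>2 \<delta>1 \<delta>2 lam2 \<mu> (RR + c))) \<longlonglongrightarrow> 0"
    by (rule infdist_tendsto_zero(2)[of "\<lambda>k. TT (Suc k)" "Sq + 1"]) (use b lim in auto)
  show ?thesis using LIMSEQ_imp_Suc[OF r2] by simp
qed

end

lemma transpose_zero: "transpose (0::real^'n^'m) = 0"
  by (simp add: transpose_def vec_eq_iff)

lemma statset_nonempty:
  fixes X :: "real^'n^'m" and H :: "real^'n^'s" and Y :: "real^'n^'c"
  assumes R: "R > (1 + \<rho>1) * norm H + (1 + \<rho>2) * norm Y" and r: "\<rho>1 \<ge> 0" "\<rho>2 \<ge> 0"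
  shows "(statset X H Y lam1 \<rho>1 \<rho>2 \<delta>1 \<delta>2 lam2 \<mu> R :: ((real^'m^'r) \<times> (real^'n^'r) \<times> (real^'r^'s) \<times> (real^'s^'c) \<times> (real^'n^'s) \<times>
    (real^'n^'c) \<times> (real^'n^'s) \<times> (real^'n^'c)) set) \<noteq> {}"
proof -
  define th0 where "th0 = ((0::real^'m^'r), (0::real^'n^'r), (0::real^'r^'s), (0::real^'s^'c), H, Y, \<rho>1 *\<^sub>R H, \<rho>2 *\<^sub>R Y)"
  have g: "grad (LsT X H Y \<rho>1 \<rho>2 \<delta>1 \<delta>2 lam2 \<mu>) th0 = 0"
    unfolding grad_eqI[OF LsT_deriv] th0_def GT_def GOm_def GU_def GQ_def GW_def
    by (simp add: transpose_zero zero_prod_def)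
  have n: "norm th0 \<le> (1 + \<rho>1) * norm H + (1 + \<rho>2) * norm Y"
  proof -
    have "norm th0 = norm (H, Y, \<rho>1 *\<^sub>R H, \<rho>2 *\<^sub>R Y)" unfolding th0_def by (simp add: norm_Pair)
    also have "\<dots> \<le> norm H + (norm Y + (norm (\<rho>1 *\<^sub>R H) + norm (\<rho>2 *\<^sub>R Y)))"
      by (meson add_left_mono norm_Pair_le order_trans)
    also have "\<dots> = (1 + \<rho>1) * norm H + (1 + \<rho>2) * norm Y" using r by (simp add: algebra_simps)
    finally show ?thesis .
  qed
  have s: "0 \<in> subdiff (\<lambda>th'. l1norm (fst (snd th'))) th0"
    unfolding subdiff_def th0_def by (simp add: l1norm_def sum_nonneg)
  have "th0 \<in> statset X H Y lam1 \<rho>1 \<rho>2 \<delta>1 \<delta>2 lam2 \<mu> R"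
    unfolding statset_def using n R s g by (auto simp: th0_def intro!: image_eqI[of 0])
  then show ?thesis by blast
qed

theorem theorem1:
  fixes X :: "real^'n^'m" and H :: "real^'n^'s" and Y :: "real^'n^'c"
    and lam1 lam2 \<rho>1 \<rho>2 \<delta>1 \<delta>2 \<mu> :: real
    and Om0 :: "real^'m^'r" and U0 :: "real^'n^'r" and Q0 :: "real^'r^'s" and W0 :: "real^'s^'c"
    and E10 :: "real^'n^'s" and E20 :: "real^'n^'c" and Z10 :: "real^'n^'s" and Z20 :: "real^'n^'c"
  assumes pos: "lam1 > 0" "lam2 > 0" "\<rho>1 > 0" "\<rho>2 > 0" "\<delta>1 > 0" "\<delta>2 > 0" "\<mu> > 0"
    and mu_ge: "\<mu> \<ge> sqrt 2 * max \<rho>1 \<rho>2"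
  shows "\<exists>\<eta>U0 \<eta>Q0 \<eta>W0 R. \<eta>U0 > 0 \<and> \<eta>Q0 > 0 \<and> \<eta>W0 > 0 \<and> R > 0 \<and>
    (\<forall>\<eta>U \<eta>Q \<eta>W.
     \<forall>(Om :: nat \<Rightarrow> real^'m^'r) (U :: nat \<Rightarrow> real^'n^'r) (Q :: nat \<Rightarrow> real^'r^'s)
      (W :: nat \<Rightarrow> real^'s^'c) (E1 :: nat \<Rightarrow> real^'n^'s) (E2 :: nat \<Rightarrow> real^'n^'c)
      (Z1 :: nat \<Rightarrow> real^'n^'s) (Z2 :: nat \<Rightarrow> real^'n^'c).
       \<eta>U > \<eta>U0 \<and> \<eta>Q > \<eta>Q0 \<and> \<eta>W > \<eta>W0 \<and>
       Om 0 = Om0 \<and> U 0 = U0 \<and> Q 0 = Q0 \<and> W 0 = W0 \<and>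
       E1 0 = E10 \<and> E2 0 = E20 \<and> Z1 0 = Z10 \<and> Z2 0 = Z20 \<and>
       (\<forall>k.
          U (Suc k) = soft_mat (lam1 / (\<mu> * \<eta>U))
            (U k - (1 / (\<mu> * \<eta>U)) *\<^sub>R
               grad (\<lambda>V. Ls X H Y \<rho>1 \<rho>2 \<delta>1 \<delta>2 lam2 \<mu>
                        (Om k) V (Q k) (W k) (E1 k) (E2 k) (Z1 k) (Z2 k)) (U k))
        \<and> Q (Suc k) = Q k - (1 / (\<mu> * \<eta>Q)) *\<^sub>R
               grad (\<lambda>V. Lag X H Y lam1 \<rho>1 \<rho>2 \<delta>1 \<delta>2 lam2 \<mu>
                        (Om k) (U (Suc k)) V (W k) (E1 k) (E2 k) (Z1 k) (Z2 k)) (Q k)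
        \<and> W (Suc k) = W k - (1 / (\<mu> * \<eta>W)) *\<^sub>R
               grad (\<lambda>V. Lag X H Y lam1 \<rho>1 \<rho>2 \<delta>1 \<delta>2 lam2 \<mu>
                        (Om k) (U (Suc k)) (Q (Suc k)) V (E1 k) (E2 k) (Z1 k) (Z2 k)) (W k)
        \<and> (\<forall>V. Lag X H Y lam1 \<rho>1 \<rho>2 \<delta>1 \<delta>2 lam2 \<mu>
                  (Om (Suc k)) (U (Suc k)) (Q (Suc k)) (W (Suc k)) (E1 k) (E2 k) (Z1 k) (Z2 k)
                \<le> Lag X H Y lam1 \<rho>1 \<rho>2 \<delta>1 \<delta>2 lam2 \<mu>
                  V (U (Suc k)) (Q (Suc k)) (W (Suc k)) (E1 k) (E2 k) (Z1 k) (Z2 k))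
        \<and> (\<forall>V. Lag X H Y lam1 \<rho>1 \<rho>2 \<delta>1 \<delta>2 lam2 \<mu>
                  (Om (Suc k)) (U (Suc k)) (Q (Suc k)) (W (Suc k)) (E1 (Suc k)) (E2 k) (Z1 k) (Z2 k)
                \<le> Lag X H Y lam1 \<rho>1 \<rho>2 \<delta>1 \<delta>2 lam2 \<mu>
                  (Om (Suc k)) (U (Suc k)) (Q (Suc k)) (W (Suc k)) V (E2 k) (Z1 k) (Z2 k))
        \<and> (\<forall>V. Lag X H Y lam1 \<rho>1 \<rho>2 \<delta>1 \<delta>2 lam2 \<mu>
                  (Om (Suc k)) (U (Suc k)) (Q (Suc k)) (W (Suc k)) (E1 (Suc k)) (E2 (Suc k)) (Z1 k) (Z2 k)
                \<le> Lag X H Y lam1 \<rho>1 \<rho>2 \<delta>1 \<delta>2 lam2 \<mu>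
                  (Om (Suc k)) (U (Suc k)) (Q (Suc k)) (W (Suc k)) (E1 (Suc k)) V (Z1 k) (Z2 k))
        \<and> Z1 (Suc k) = Z1 k + \<mu> *\<^sub>R (H - Q (Suc k) ** U (Suc k) - E1 (Suc k))
        \<and> Z2 (Suc k) = Z2 k + \<mu> *\<^sub>R (Y - (W (Suc k) ** Q (Suc k)) ** U (Suc k) - E2 (Suc k)))
       \<longrightarrow> statset X H Y lam1 \<rho>1 \<rho>2 \<delta>1 \<delta>2 lam2 \<mu> R \<noteq> {}
         \<and> (\<lambda>k. infdist (Om k, U k, Q k, W k, E1 k, E2 k, Z1 k, Z2 k)
                   (statset X H Y lam1 \<rho>1 \<rho>2 \<delta>1 \<delta>2 lam2 \<mu> R)) \<longlonglongrightarrow> 0)"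
  proof -
  interpret d: admm_data X H Y lam1 lam2 \<rho>1 \<rho>2 \<delta>1 \<delta>2 \<mu> Om0 U0 Q0 W0 E10 E20 Z10 Z20
    by unfold_locales (use pos mu_ge in auto)
  define c where "c = (1 + \<rho>1) * norm H + (1 + \<rho>2) * norm Y"
  have c0: "c \<ge> 0" unfolding c_def using pos by simp
  have Rpos: "d.RR + c > 0" using d.RR_pos c0 by simp
  have Rgt: "d.RR + c > (1 + \<rho>1) * norm H + (1 + \<rho>2) * norm Y" using d.RR_pos unfolding c_def by simp
  show ?thesis
    apply (rule exI[of _ d.etaU0], rule exI[of _ d.etaQ0], rule exI[of _ d.etaW0], rule exI[of _ "d.RR + c"])
    apply (intro conjI[OF d.etas_pos(1)] conjI[OF d.etas_pos(2)] conjI[OF d.etas_pos(3)] conjI[OF Rpos] allI impI)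
    subgoal premises prems for \<eta>U \<eta>Q \<eta>W Om U Q W E1 E2 Z1 Z2
    proof -
      interpret r: admm_run X H Y lam1 lam2 \<rho>1 \<rho>2 \<delta>1 \<delta>2 \<mu> Om0 U0 Q0 W0 E10 E20 Z10 Z20
        \<eta>U \<eta>Q \<eta>W Om U Q W E1 E2 Z1 Z2
        by (unfold_locales; use prems pos mu_ge in blast)
      show ?thesis
      proof
        show "statset X H Y lam1 \<rho>1 \<rho>2 \<delta>1 \<delta>2 lam2 \<mu> (d.RR + c) \<noteq> {}"
          by (rule statset_nonempty[OF Rgt]) (use pos in auto)
        show "(\<lambda>k. infdist (Om k, U k, Q k, W k, E1 k, E2 k, Z1 k, Z2 k)
                   (statset X H Y lam1 \<rho>1 \<rho>2 \<delta>1 \<delta>2 lam2 \<mu> (d.RR + c))) \<longlonglongrightarrow> 0"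
          by (rule r.final2[OF c0])
      qed
    qed
    done
qed

end
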